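(* A $d$-polytope $P\subset\mathbb{R}^d$ is lattice complete with respect to a $d$-dimensional lattice $\Lambda\subset\mathbb{R}^d$ if and only if for each facet $F$ of $P$ there is a diameter segment $I_F\subset P$ having an endpoint in the relative interior of $F$.
   Context: A lattice $\Lambda\subset\mathbb{R}^d$ is a discrete subgroup spanning $\mathbb{R}^d$. A segment $[a,b]$ is a lattice segment if $b-a$ is parallel to a nonzero vector of $\Lambda$; its lattice length is $|b-a|/|v|$ where $v$ generates $\Lambda\cap\mathrm{span}\{b-a\}$ and is a positive multiple of $b-a$. The lattice diameter $\mathrm{diam}_\Lambda(C)$ of a convex body $C$ is the maximum lattice length of a lattice segment contained in $C$; a diameter segment of $C$ is a lattice segment contained in $C$ whose lattice length equals $\mathrm{diam}_\Lambda(C)$. $C$ is lattice complete if no convex body $C'\supsetneq C$ has $\mathrm{diam}_\Lambda(C')=\mathrm{diam}_\Lambda(C)$. Convex bodies are compact convex sets with non-empty interior. *)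

theory Defs
  imports "HOL-Analysis.Analysis"
begin

definition is_lattice :: "'a::euclidean_space set \<Rightarrow> bool" where
  "is_lattice L \<longleftrightarrow>
     0 \<in> L \<and> (\<forall>x\<in>L. \<forall>y\<in>L. x + y \<in> L) \<and> (\<forall>x\<in>L. - x \<in> L) \<and>
     (\<exists>e>0. \<forall>x\<in>L. x \<noteq> 0 \<longrightarrow> e \<le> norm x) \<and>
     span L = UNIV"

definition convex_body :: "'a::euclidean_space set \<Rightarrow> bool" where
  "convex_body C \<longleftrightarrow> compact C \<and> convex C \<and> interior C \<noteq> {}"

definition lattice_segment :: "'a::euclidean_space set \<Rightarrow> 'a \<Rightarrow> 'a \<Rightarrow> bool" where
  "lattice_segment L a b \<longleftrightarrow> (\<exists>v\<in>L. v \<noteq> 0 \<and> (\<exists>c::real. b - a = c *\<^sub>R v))"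

definition lattice_length :: "'a::euclidean_space set \<Rightarrow> 'a \<Rightarrow> 'a \<Rightarrow> real" where
  "lattice_length L a b =
     norm (b - a) /
     norm (THE v. v \<in> L \<and> (\<exists>c>0. v = c *\<^sub>R (b - a)) \<and>
                  L \<inter> span {b - a} = range (\<lambda>k::int. of_int k *\<^sub>R v))"

definition lattice_diam :: "'a::euclidean_space set \<Rightarrow> 'a set \<Rightarrow> real" where
  "lattice_diam L C =
     Sup {lattice_length L a b | a b. lattice_segment L a b \<and> closed_segment a b \<subseteq> C}"

definition diameter_segment :: "'a::euclidean_space set \<Rightarrow> 'a set \<Rightarrow> 'a \<Rightarrow> 'a \<Rightarrow> bool" where
  "diameter_segment L C a b \<longleftrightarrow>
     lattice_segment L a b \<and> closed_segment a b \<subseteq> C \<and> lattice_length L a b = lattice_diam L C"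

definition lattice_complete :: "'a::euclidean_space set \<Rightarrow> 'a set \<Rightarrow> bool" where
  "lattice_complete L C \<longleftrightarrow>
     \<not> (\<exists>C'. convex_body C' \<and> C \<subset> C' \<and> lattice_diam L C' = lattice_diam L C)"

end

theory Submission
  imports Defs
begin


definition gen_ok :: "'a::euclidean_space set \<Rightarrow> 'a \<Rightarrow> 'a \<Rightarrow> bool" where
  "gen_ok L w v \<longleftrightarrow> v \<in> L \<and> (\<exists>c>0. v = c *\<^sub>R w) \<and> L \<inter> span {w} = range (\<lambda>k::int. of_int k *\<^sub>R v)"

lemma lattice_length_alt:
  "lattice_length L a b = norm (b - a) / norm (THE v. gen_ok L (b - a) v)"
  by (simp add: lattice_length_def gen_ok_def)

lemma gen_unique:
  assumes "gen_ok L w v1" "gen_ok L w v2"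
  shows "v1 = v2"
proof -
  obtain c1 where c1: "c1 > 0" "v1 = c1 *\<^sub>R w" using assms(1) by (auto simp: gen_ok_def)
  obtain c2 where c2: "c2 > 0" "v2 = c2 *\<^sub>R w" using assms(2) by (auto simp: gen_ok_def)
  show ?thesis
  proof (cases "w = 0")
    case True then show ?thesis using c1 c2 by simp
  next
    case False
    have "v1 \<in> L \<inter> span {w}" using assms(1) c1 by (auto simp: gen_ok_def span_clauses)
    then obtain k :: int where k: "v1 = of_int k *\<^sub>R v2" using assms(2) by (auto simp: gen_ok_def)
    have "v2 \<in> L \<inter> span {w}" using assms(2) c2 by (auto simp: gen_ok_def span_clauses)
    then obtain j :: int where j: "v2 = of_int j *\<^sub>R v1" using assms(1) by (auto simp: gen_ok_def)
    have e1: "c1 = of_int k * c2" using k c1 c2 False by (simp add: scaleR_right_imp_eq)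
    have e2: "c2 = of_int j * c1" using j c1 c2 False by (simp add: scaleR_right_imp_eq)
    have "of_int k * of_int j = (1::real)" using e1 e2 c1 c2
      by (metis mult.assoc mult_cancel_right1 order_less_irrefl mult.commute)
    then have "k * j = 1" by (metis of_int_1 of_int_eq_iff of_int_mult)
    moreover have "k > 0" using e1 c1 c2 by (smt (verit) mult_nonpos_nonneg of_int_le_0_iff)
    ultimately have "k = 1" using zmult_eq_1_iff by auto
    then show ?thesis using k by simp
  qed
qed

lemma lattice_length_gen:
  assumes "gen_ok L (b - a) g"
  shows "lattice_length L a b = norm (b - a) / norm g"
proof -
  have "(THE v. gen_ok L (b - a) v) = g"
    using assms gen_unique by (intro the_equality) auto
  then show ?thesis by (simp add: lattice_length_alt)
qed

lemma lattice_length_same: "lattice_length L a a = 0"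
  by (simp add: lattice_length_def)

lemma span_scale_pos:
  assumes "t \<noteq> 0" shows "span {t *\<^sub>R w} = span {w}"
proof -
  have "w = (1/t) *\<^sub>R (t *\<^sub>R w)" using assms by simp
  moreover have "(1/t) *\<^sub>R (t *\<^sub>R w) \<in> span {t *\<^sub>R w}"
    by (intro span_scale span_base) simp
  ultimately have "w \<in> span {t *\<^sub>R w}" by simp
  moreover have "t *\<^sub>R w \<in> span {w}" by (simp add: span_base span_scale)
  ultimately show ?thesis by (simp add: span_eq)
qed

lemma gen_scale:
  assumes "gen_ok L w v" "t > 0"
  shows "gen_ok L (t *\<^sub>R w) v"
proof -
  obtain c where c: "c > 0" "v = c *\<^sub>R w" using assms by (auto simp: gen_ok_def)
  have "v = (c / t) *\<^sub>R (t *\<^sub>R w)" using c assms(2) by simp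
  moreover have "c / t > 0" using c assms by simp
  ultimately show ?thesis using assms span_scale_pos[of t w] by (auto simp: gen_ok_def)
qed

lemma int_mult_in:
  assumes "is_lattice L" "v \<in> L"
  shows "of_int k *\<^sub>R v \<in> L"
proof -
  have n: "of_nat m *\<^sub>R v \<in> L" for m
  proof (induction m)
    case 0 then show ?case using assms by (simp add: is_lattice_def)
  next
    case (Suc m)
    then have "v + of_nat m *\<^sub>R v \<in> L" using assms by (simp add: is_lattice_def)
    then show ?case by (simp add: algebra_simps)
  qed
  show ?thesis
  proof (cases "k \<ge> 0")
    case True then show ?thesis using n[of "nat k"] by simp
  next
    case False
    have "- (of_nat (nat (-k)) *\<^sub>R v) \<in> L" using n[of "nat (-k)"] assms by (simp add: is_lattice_def)
    then show ?thesis using False by simp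
  qed
qed

lemma gen_neg:
  assumes "gen_ok L w v" "is_lattice L"
  shows "gen_ok L (- w) (- v)"
proof -
  obtain c where c: "c > 0" "v = c *\<^sub>R w" using assms by (auto simp: gen_ok_def)
  have "span {- w} = span {w}" using span_scale_pos[of "-1" w] by simp
  moreover have "range (\<lambda>k::int. of_int k *\<^sub>R (- v)) = range (\<lambda>k::int. of_int k *\<^sub>R v)"
  proof -
    have A: "of_int k *\<^sub>R (- v) = of_int (- k) *\<^sub>R v" for k :: int by simp
    have B: "of_int k *\<^sub>R v = of_int (- k) *\<^sub>R (- v)" for k :: int by simp
    show ?thesis
    proof (intro equalityI subsetI)
      fix y assume "y \<in> range (\<lambda>k::int. of_int k *\<^sub>R (- v))"
      then obtain k :: int where "y = of_int k *\<^sub>R (- v)" by blast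
      then show "y \<in> range (\<lambda>k::int. of_int k *\<^sub>R v)" using A by blast
    next
      fix y assume "y \<in> range (\<lambda>k::int. of_int k *\<^sub>R v)"
      then obtain k :: int where "y = of_int k *\<^sub>R v" by blast
      then show "y \<in> range (\<lambda>k::int. of_int k *\<^sub>R (- v))" using B by blast
    qed
  qed
  moreover have "- v \<in> L" using assms by (auto simp: gen_ok_def is_lattice_def)
  ultimately show ?thesis using assms c by (auto simp: gen_ok_def)
qed

lemma lattice_finite:
  assumes "is_lattice L"
  shows "finite (L \<inter> cball 0 R)"
proof (rule ccontr)
  assume inf: "infinite (L \<inter> cball 0 R)"
  obtain e where e: "e > 0" "\<And>x. x \<in> L \<Longrightarrow> x \<noteq> 0 \<Longrightarrow> e \<le> norm x"
    using assms by (auto simp: is_lattice_def)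
  have "\<exists>x\<in>cball 0 R. x islimpt (L \<inter> cball 0 R)"
    using inf compact_cball[of "0::'a" R] unfolding compact_eq_Bolzano_Weierstrass
    by (meson inf_le2)
  then obtain x where "x islimpt (L \<inter> cball 0 R)" by blast
  then have "infinite (L \<inter> cball 0 R \<inter> ball x (e/2))"
    using e unfolding islimpt_eq_infinite_ball by simp
  then obtain y1 where y1: "y1 \<in> L \<inter> cball 0 R \<inter> ball x (e/2)"
    using infinite_imp_nonempty by blast
  have "infinite (L \<inter> cball 0 R \<inter> ball x (e/2) - {y1})"
    using \<open>infinite (L \<inter> cball 0 R \<inter> ball x (e/2))\<close> by simp
  then obtain y2 where y2: "y2 \<in> L \<inter> cball 0 R \<inter> ball x (e/2) - {y1}"
    using infinite_imp_nonempty by blast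
  have "y1 \<in> L" "- y2 \<in> L" using y1 y2 assms unfolding is_lattice_def by auto
  then have "y1 + - y2 \<in> L" using assms unfolding is_lattice_def by blast
  then have yL: "y1 - y2 \<in> L" by simp
  moreover have "y1 - y2 \<noteq> 0" using y2 by auto
  moreover have "norm (y1 - y2) < e"
  proof -
    have "dist x y1 < e/2" "dist x y2 < e/2" using y1 y2 by auto
    moreover have "dist y1 y2 \<le> dist y1 x + dist x y2" by (rule dist_triangle)
    ultimately have "dist y1 y2 < e" by (simp add: dist_commute)
    then show ?thesis by (simp add: dist_norm)
  qed
  ultimately show False using e(2)[OF yL] by linarith
qed

lemma lattice_nonzero:
  assumes "is_lattice L"
  obtains u where "u \<in> L" "u \<noteq> 0"
proof -
  have "\<not> L \<subseteq> {0}"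
  proof
    assume "L \<subseteq> {0}"
    then have "span L \<subseteq> span {0}" by (rule span_mono)
    then have "span L \<subseteq> {0}" by simp
    moreover obtain b :: 'a where "b \<in> Basis" by (meson ex_in_conv nonempty_Basis)
    ultimately show False using assms by (auto simp: is_lattice_def nonzero_Basis)
  qed
  then show ?thesis using that by blast
qed



lemma span_single_mem: "y \<in> span {w::'a::euclidean_space} \<longleftrightarrow> (\<exists>s. y = s *\<^sub>R w)"
  by (auto simp: span_singleton)

lemma gen_exists:
  assumes L: "is_lattice L" and u: "u \<in> L" "u \<noteq> 0" and w: "w = c *\<^sub>R u" "w \<noteq> 0"
  shows "\<exists>v. gen_ok L w v"
proof -
  have c0: "c \<noteq> 0" using w by auto
  define T where "T = {t::real. t > 0 \<and> t *\<^sub>R w \<in> L}"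
  have "\<exists>t1. t1 \<in> T"
  proof (cases "c > 0")
    case True
    have "(1/c) *\<^sub>R w = u" using w c0 by simp
    then show ?thesis using True u by (intro exI[of _ "1/c"]) (auto simp: T_def)
  next
    case False
    then have "c < 0" using c0 by simp
    have "(-1/c) *\<^sub>R w = - u" using w c0 by simp
    moreover have "- u \<in> L" using L u by (simp add: is_lattice_def)
    ultimately show ?thesis using \<open>c < 0\<close> by (intro exI[of _ "-1/c"]) (auto simp: T_def divide_neg_neg)
  qed
  then obtain t1 where t1: "t1 \<in> T" by blast
  define T' where "T' = {t \<in> T. t \<le> t1}"
  have "(\<lambda>t. t *\<^sub>R w) ` T' \<subseteq> L \<inter> cball 0 (t1 * norm w)"
    by (auto simp: T'_def T_def mult_right_mono)
  then have "finite ((\<lambda>t. t *\<^sub>R w) ` T')"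
    using lattice_finite[OF L] finite_subset by blast
  moreover have "inj_on (\<lambda>t. t *\<^sub>R w) T'"
    using w(2) by (auto simp: inj_on_def)
  ultimately have finT': "finite T'" using finite_imageD by blast
  have "t1 \<in> T'" using t1 by (simp add: T'_def)
  then have neT': "T' \<noteq> {}" by blast
  define t0 where "t0 = Min T'"
  have t0T': "t0 \<in> T'" using finT' neT' by (simp add: t0_def)
  then have t0T: "t0 \<in> T" and t0pos: "t0 > 0" by (auto simp: T'_def T_def)
  have t0min: "t0 \<le> t" if "t \<in> T" for t
  proof (cases "t \<le> t1")
    case True then show ?thesis using that finT' by (simp add: t0_def T'_def)
  next
    case False
    have "t0 \<le> t1" using t0T' by (simp add: T'_def)
    then show ?thesis using False by simp
  qed
  define v where "v = t0 *\<^sub>R w"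
  have vL: "v \<in> L" using t0T by (simp add: T_def v_def)
  have "L \<inter> span {w} = range (\<lambda>k::int. of_int k *\<^sub>R v)"
  proof (intro equalityI subsetI)
    fix y assume y: "y \<in> L \<inter> span {w}"
    then obtain s where s: "y = s *\<^sub>R w" by (auto simp: span_single_mem)
    define k where "k = \<lfloor>s / t0\<rfloor>"
    define r where "r = s - of_int k * t0"
    have "of_int k \<le> s / t0" "s / t0 < of_int k + 1" unfolding k_def by linarith+
    then have r0: "0 \<le> r" and r1: "r < t0" using t0pos
      by (auto simp: r_def field_simps)
    have A: "- (of_int k *\<^sub>R v) \<in> L" using int_mult_in[OF L vL, of "-k"] by simp
    have "y + - (of_int k *\<^sub>R v) \<in> L" using y A L unfolding is_lattice_def by blast
    moreover have "y + - (of_int k *\<^sub>R v) = r *\<^sub>R w"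
      by (simp add: s v_def r_def algebra_simps)
    ultimately have rw: "r *\<^sub>R w \<in> L" by simp
    have "r = 0"
    proof (rule ccontr)
      assume "r \<noteq> 0"
      then have "r \<in> T" using r0 rw by (simp add: T_def)
      then show False using t0min r1 by force
    qed
    then have "y = of_int k *\<^sub>R v" by (simp add: s v_def r_def)
    then show "y \<in> range (\<lambda>k::int. of_int k *\<^sub>R v)" by blast
  next
    fix y assume "y \<in> range (\<lambda>k::int. of_int k *\<^sub>R v)"
    then obtain k :: int where k: "y = of_int k *\<^sub>R v" by blast
    have "y \<in> L" using k int_mult_in[OF L vL] by simp
    moreover have "y \<in> span {w}" using k by (auto simp: span_single_mem v_def)
    ultimately show "y \<in> L \<inter> span {w}" by blast
  qed
  then show ?thesis using vL t0pos unfolding gen_ok_def v_def by blast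
qed

lemma seg_gen:
  assumes "is_lattice L" "lattice_segment L a b" "a \<noteq> b"
  shows "\<exists>g. gen_ok L (b - a) g"
proof -
  obtain v c where "v \<in> L" "v \<noteq> 0" "b - a = c *\<^sub>R v"
    using assms(2) unfolding lattice_segment_def by blast
  moreover have "c \<noteq> 0" using \<open>b - a = c *\<^sub>R v\<close> assms(3) by auto
  ultimately show ?thesis using gen_exists[OF assms(1), of v "b - a" c] assms(3) by auto
qed

lemma gen_props:
  assumes "gen_ok L w g" "w \<noteq> 0"
  shows "g \<noteq> 0" "g \<in> L" "w = (norm w / norm g) *\<^sub>R g" "gen_ok L g g"
proof -
  obtain c where c: "c > 0" "g = c *\<^sub>R w" using assms by (auto simp: gen_ok_def)
  show "g \<noteq> 0" using c assms by simp
  show "g \<in> L" using assms by (simp add: gen_ok_def)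
  have "norm g = c * norm w" using c by simp
  then show "w = (norm w / norm g) *\<^sub>R g" using c assms by (simp add: field_simps)
  have "span {g} = span {w}" using c span_scale_pos[of c w] by simp
  moreover have "g = 1 *\<^sub>R g" by simp
  ultimately show "gen_ok L g g" using assms c unfolding gen_ok_def by (metis zero_less_one)
qed

lemma length_prim:
  assumes "gen_ok L g g" "t > 0" and g0: "g \<noteq> 0"
  shows "lattice_length L p (p + t *\<^sub>R g) = t" "lattice_segment L p (p + t *\<^sub>R g)"
proof -
  have "gen_ok L (t *\<^sub>R g) g" using gen_scale[OF assms(1,2)] .
  then have "gen_ok L ((p + t *\<^sub>R g) - p) g" by simp
  from lattice_length_gen[OF this]
  have "lattice_length L p (p + t *\<^sub>R g) = norm (t *\<^sub>R g) / norm g" by simp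
  then show "lattice_length L p (p + t *\<^sub>R g) = t" using g0 assms(2) by simp
  show "lattice_segment L p (p + t *\<^sub>R g)" using assms g0 unfolding lattice_segment_def gen_ok_def
    by auto
qed

definition LS :: "'a::euclidean_space set \<Rightarrow> 'a set \<Rightarrow> real set" where
  "LS L C = {lattice_length L a b | a b. lattice_segment L a b \<and> closed_segment a b \<subseteq> C}"

lemma lattice_diam_LS: "lattice_diam L C = Sup (LS L C)"
  by (simp add: lattice_diam_def LS_def)

lemma length_le_norm:
  assumes L: "is_lattice L" and "lattice_segment L a b"
  obtains e where "e > 0" "lattice_length L a b \<le> norm (b - a) / e"
        "\<forall>a b. lattice_segment L a b \<longrightarrow> lattice_length L a b \<le> norm (b - a) / e"
proof -
  obtain e where e: "e > 0" "\<And>x. x \<in> L \<Longrightarrow> x \<noteq> 0 \<Longrightarrow> e \<le> norm x"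
    using L by (auto simp: is_lattice_def)
  have *: "lattice_length L a b \<le> norm (b - a) / e" if seg: "lattice_segment L a b" for a b
  proof (cases "a = b")
    case True then show ?thesis by (simp add: lattice_length_same)
  next
    case False
    obtain g where g: "gen_ok L (b - a) g" using seg_gen[OF L seg False] by blast
    have "g \<noteq> 0" "g \<in> L" using gen_props[OF g] False by auto
    then have "e \<le> norm g" using e by blast
    then show ?thesis using lattice_length_gen[OF g] e(1)
      by (simp add: frac_le)
  qed
  show ?thesis using that[OF e(1) *[OF assms(2)]] * by blast
qed

lemma LS_bdd:
  assumes L: "is_lattice L" and "bounded C"
  shows "bdd_above (LS L C)"
proof -
  obtain e where e: "e > 0" "\<forall>a b. lattice_segment L a b \<longrightarrow> lattice_length L a b \<le> norm (b - a) / e"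
  proof -
    obtain u where u: "u \<in> L" "u \<noteq> 0" using lattice_nonzero[OF L] by blast
    have "lattice_segment L 0 0" using u unfolding lattice_segment_def by (intro bexI[of _ u]) auto
    then show ?thesis using length_le_norm[OF L] that by metis
  qed
  obtain B where B: "\<forall>x\<in>C. norm x \<le> B" using assms(2) by (auto simp: bounded_iff)
  show ?thesis unfolding bdd_above_def
  proof (intro exI ballI)
    fix l assume "l \<in> LS L C"
    then obtain a b where ab: "l = lattice_length L a b" "lattice_segment L a b" "closed_segment a b \<subseteq> C"
      by (auto simp: LS_def)
    have "a \<in> C" "b \<in> C" using ab(3) by auto
    then have "norm a \<le> B" "norm b \<le> B" using B by auto
    then have "norm (b - a) \<le> 2 * B" using norm_triangle_ineq4[of b a] by linarith
    then have "norm (b - a) / e \<le> 2 * B / e" using e(1) by (simp add: divide_right_mono)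
    then show "l \<le> 2 * B / e" using e(2) ab by fastforce
  qed
qed

lemma diam_ge:
  assumes "is_lattice L" "bounded C" "lattice_segment L a b" "closed_segment a b \<subseteq> C"
  shows "lattice_length L a b \<le> lattice_diam L C"
  unfolding lattice_diam_LS
  using assms LS_bdd[OF assms(1,2)] by (intro cSup_upper) (auto simp: LS_def)

lemma diam_le:
  assumes "is_lattice L" "C \<noteq> {}"
    and "\<And>a b. lattice_segment L a b \<Longrightarrow> closed_segment a b \<subseteq> C \<Longrightarrow> lattice_length L a b \<le> M"
  shows "lattice_diam L C \<le> M"
  unfolding lattice_diam_LS
proof (rule cSup_least)
  obtain u where u: "u \<in> L" "u \<noteq> 0" using lattice_nonzero[OF assms(1)] by blast
  obtain z where "z \<in> C" using assms(2) by blast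
  then have "lattice_segment L z z" "closed_segment z z \<subseteq> C"
    using u unfolding lattice_segment_def by (auto intro!: bexI[of _ u])
  then show "LS L C \<noteq> {}" unfolding LS_def by blast
  show "\<And>x. x \<in> LS L C \<Longrightarrow> x \<le> M" using assms(3) unfolding LS_def by blast
qed

lemma diam_nonneg:
  assumes "is_lattice L" "bounded C" "C \<noteq> {}"
  shows "0 \<le> lattice_diam L C"
proof -
  obtain u where u: "u \<in> L" "u \<noteq> 0" using lattice_nonzero[OF assms(1)] by blast
  obtain z where "z \<in> C" using assms(3) by blast
  then have "lattice_segment L z z" "closed_segment z z \<subseteq> C"
    using u unfolding lattice_segment_def by (auto intro!: bexI[of _ u])
  then show ?thesis using diam_ge[OF assms(1,2)] lattice_length_same by metis
qed

lemma diam_pos: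
  assumes L: "is_lattice L" and C: "convex_body C"
  shows "0 < lattice_diam L C"
proof -
  obtain u where u: "u \<in> L" "u \<noteq> 0" using lattice_nonzero[OF L] by blast
  obtain z where "z \<in> interior C" using C by (auto simp: convex_body_def)
  then obtain r where r: "r > 0" "ball z r \<subseteq> C" using mem_interior by blast
  define t where "t = r / (2 * norm u)"
  have t: "t > 0" using r u by (simp add: t_def)
  define b where "b = z + t *\<^sub>R u"
  have "norm (t *\<^sub>R u) = r / 2" using u r by (simp add: t_def)
  then have "b \<in> ball z r" using r by (simp add: b_def dist_norm)
  moreover have "z \<in> ball z r" using r by simp
  ultimately have "closed_segment z b \<subseteq> C" using r(2) closed_segment_subset convex_ball by blast
  have seg: "lattice_segment L z b" using u unfolding lattice_segment_def b_def by auto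
  have ne: "z \<noteq> b" using t u by (simp add: b_def)
  obtain g where g: "gen_ok L (b - z) g" using seg_gen[OF L seg ne] by blast
  have "lattice_length L z b > 0" using lattice_length_gen[OF g] ne gen_props(1)[OF g] by simp
  also have "lattice_length L z b \<le> lattice_diam L C"
    using diam_ge[OF L _ seg \<open>closed_segment z b \<subseteq> C\<close>] C compact_imp_bounded by (auto simp: convex_body_def)
  finally show ?thesis .
qed

lemma length_sym:
  assumes L: "is_lattice L" and "lattice_segment L a b"
  shows "lattice_length L b a = lattice_length L a b" "lattice_segment L b a"
proof -
  obtain v c where "v \<in> L" "v \<noteq> 0" "b - a = c *\<^sub>R v"
    using assms(2) unfolding lattice_segment_def by blast
  moreover have "a - b = (- c) *\<^sub>R v"
  proof -
    have "a - b = - (b - a)" by simp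
    also have "\<dots> = (- c) *\<^sub>R v" using \<open>b - a = c *\<^sub>R v\<close> by simp
    finally show ?thesis .
  qed
  ultimately show "lattice_segment L b a" unfolding lattice_segment_def by blast
  show "lattice_length L b a = lattice_length L a b"
  proof (cases "a = b")
    case True then show ?thesis by simp
  next
    case False
    obtain g where g: "gen_ok L (b - a) g" using seg_gen[OF L assms(2) False] by blast
    have "gen_ok L (a - b) (- g)" using gen_neg[OF g L] by simp
    then have "lattice_length L b a = norm (a - b) / norm (- g)" by (rule lattice_length_gen)
    then show ?thesis using lattice_length_gen[OF g]
      by (simp add: norm_minus_commute)
  qed
qed

lemma diameter_segment_sym:
  assumes "is_lattice L" "diameter_segment L C a b"
  shows "diameter_segment L C b a"
proof -
  have "lattice_segment L a b" "closed_segment a b \<subseteq> C" "lattice_length L a b = lattice_diam L C"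
    using assms(2) unfolding diameter_segment_def by auto
  then show ?thesis unfolding diameter_segment_def
    using length_sym[OF assms(1)] closed_segment_commute[of a b] by simp
qed



lemma ev_small:
  fixes A B :: real
  assumes "B > 0" "A \<ge> 0"
  shows "eventually (\<lambda>\<epsilon>. \<epsilon> * A \<le> B) (at_right 0)"
  unfolding eventually_at_right_field
proof (intro exI[of _ "B / (A + 1)"] conjI allI impI)
  show "0 < B / (A + 1)" using assms by simp
  fix y :: real assume y: "0 < y" "y < B / (A + 1)"
  then have "y * (A + 1) < B" using assms by (simp add: pos_less_divide_eq)
  moreover have "y * A \<le> y * (A + 1)" using y by simp
  ultimately show "y * A \<le> B" by linarith
qed

lemma ev_pos: "eventually (\<lambda>\<epsilon>::real. 0 < \<epsilon>) (at_right 0)"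
  by (simp add: eventually_at_filter)

lemma polyhedron_INT:
  "finite A \<Longrightarrow> (\<And>x. x \<in> A \<Longrightarrow> polyhedron (S x)) \<Longrightarrow> polyhedron (\<Inter>x\<in>A. S x)"
  by (intro polyhedron_Inter) auto

locale fsetup =
  fixes K :: "('a::euclidean_space \<times> real) set" and P F :: "'a set" and n :: 'a and h :: real and c :: 'a
  assumes finK: "finite K"
    and Pdef: "P = {y. \<forall>(a,b)\<in>K. a \<bullet> y \<le> b}"
    and bndP: "bounded P"
    and n0: "n \<noteq> 0"
    and Psub: "P \<subseteq> {y. n \<bullet> y \<le> h}"
    and Fdef: "F = P \<inter> {y. n \<bullet> y = h}"
    and cF: "c \<in> rel_interior F"
    and affF: "affine hull F = {y. n \<bullet> y = h}"
begin

definition I1 where "I1 = {(a,b) \<in> K. a \<bullet> c < b}"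
definition eta where "eta y = n \<bullet> y - h"
definition xe where "xe \<epsilon> = c + \<epsilon> *\<^sub>R n"
definition Ce where "Ce \<epsilon> = convex hull (insert (xe \<epsilon>) P)"
definition good where "good \<epsilon> \<longleftrightarrow> \<epsilon> > 0 \<and> (\<forall>(a,b)\<in>I1. \<epsilon> * \<bar>a \<bullet> n\<bar> \<le> (b - a \<bullet> c) / 2)"
definition J where "J = insert (0,1) I1"
definition uf :: "('a \<times> real) \<Rightarrow> 'a \<Rightarrow> real" where "uf j y = snd j - fst j \<bullet> y"

lemma finI1: "finite I1" using finK by (rule finite_subset[rotated]) (auto simp: I1_def)
lemma finJ: "finite J" using finI1 by (simp add: J_def)

lemma inP: "y \<in> P \<longleftrightarrow> (\<forall>(a,b)\<in>K. a \<bullet> y \<le> b)"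
  using Pdef by auto

lemma convexP: "convex P"
  unfolding convex_def
proof (intro ballI allI impI)
  fix x y and u v :: real assume xy: "x \<in> P" "y \<in> P" and uv: "0 \<le> u" "0 \<le> v" "u + v = 1"
  show "u *\<^sub>R x + v *\<^sub>R y \<in> P" unfolding inP
  proof (intro ballI, clarify)
    fix a b assume ab: "(a, b) \<in> K"
    have "a \<bullet> x \<le> b" "a \<bullet> y \<le> b" using xy ab inP by auto
    then have "u * (a \<bullet> x) + v * (a \<bullet> y) \<le> u * b + v * b"
      using uv by (intro add_mono mult_left_mono) auto
    also have "\<dots> = (u + v) * b" by (simp add: distrib_right)
    also have "\<dots> = b" using uv by simp
    finally show "a \<bullet> (u *\<^sub>R x + v *\<^sub>R y) \<le> b" by (simp add: inner_add_right)
  qed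
qed

lemma cinF: "c \<in> F" using cF rel_interior_subset by blast
lemma cinP: "c \<in> P" using cinF Fdef by blast
lemma nc: "n \<bullet> c = h" using cinF Fdef by blast
lemma FsubP: "F \<subseteq> P" using Fdef by blast
lemma nn_pos: "n \<bullet> n > 0" using n0 by simp

lemma factA:
  assumes ab: "(a,b) \<in> K" "(a,b) \<notin> I1" and y: "n \<bullet> y = h"
  shows "a \<bullet> y = b"
proof -
  have acb: "a \<bullet> c = b"
  proof -
    have "a \<bullet> c \<le> b" using cinP ab inP by auto
    then show ?thesis using ab by (auto simp: I1_def)
  qed
  obtain r where r: "r > 0" "ball c r \<inter> affine hull F \<subseteq> F"
    using cF mem_rel_interior_ball by blast
  show ?thesis
  proof (cases "y = c")
    case True then show ?thesis using acb by simp
  next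
    case False
    define d where "d = y - c"
    have d0: "norm d > 0" using False by (simp add: d_def)
    define s where "s = r / (2 * norm d)"
    have s0: "s > 0" using r d0 by (simp add: s_def)
    have ns: "norm (s *\<^sub>R d) < r" using r d0 by (simp add: s_def)
    have yA: "y \<in> affine hull F" "c \<in> affine hull F" using y affF nc by auto
    have "c + s *\<^sub>R d \<in> affine hull F"
    proof -
      have "c + s *\<^sub>R d = (1 - s) *\<^sub>R c + s *\<^sub>R y" by (simp add: d_def algebra_simps)
      then show ?thesis using yA affine_affine_hull mem_affine by (metis add.commute diff_add_cancel)
    qed
    moreover have "c + s *\<^sub>R d \<in> ball c r" using ns by (simp add: dist_norm)
    ultimately have p1: "c + s *\<^sub>R d \<in> P" using r FsubP by blast
    have "c - s *\<^sub>R d \<in> affine hull F"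
    proof -
      have "c - s *\<^sub>R d = (1 - (- s)) *\<^sub>R c + (- s) *\<^sub>R y" by (simp add: d_def algebra_simps)
      then show ?thesis using yA affine_affine_hull mem_affine by (metis add.commute diff_add_cancel)
    qed
    moreover have "c - s *\<^sub>R d \<in> ball c r" using ns by (simp add: dist_norm)
    ultimately have p2: "c - s *\<^sub>R d \<in> P" using r FsubP by blast
    have "a \<bullet> (c + s *\<^sub>R d) \<le> b" "a \<bullet> (c - s *\<^sub>R d) \<le> b" using p1 p2 ab inP by auto
    then have "s * (a \<bullet> d) \<le> 0" "- (s * (a \<bullet> d)) \<le> 0" using acb
      by (auto simp: inner_add_right inner_diff_right)
    then have "s * (a \<bullet> d) = 0" by linarith
    then have "a \<bullet> d = 0" using s0 by simp
    then show ?thesis using acb by (simp add: d_def inner_diff_right)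
  qed
qed

lemma hyper_in_F:
  assumes "n \<bullet> y = h" "\<forall>(a,b)\<in>I1. a \<bullet> y \<le> b"
  shows "y \<in> F"
proof -
  have "y \<in> P" unfolding inP
  proof (intro ballI, clarify)
    fix a b assume ab: "(a,b) \<in> K"
    show "a \<bullet> y \<le> b"
    proof (cases "(a,b) \<in> I1")
      case True then show ?thesis using assms by auto
    next
      case False then show ?thesis using factA[OF ab False assms(1)] by simp
    qed
  qed
  then show ?thesis using assms Fdef by blast
qed

lemma relint_crit:
  assumes pF: "p \<in> F" and strict: "\<forall>(a,b)\<in>I1. a \<bullet> p < b"
  shows "p \<in> rel_interior F"
proof -
  define r where "r = Min (insert 1 ((\<lambda>(a,b). (b - a \<bullet> p) / (norm a + 1)) ` I1))"
  have fin: "finite (insert 1 ((\<lambda>(a,b). (b - a \<bullet> p) / (norm a + 1)) ` I1))" using finI1 by simp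
  have pos: "0 < (b - a \<bullet> p) / (norm a + 1)" if "(a,b) \<in> I1" for a b
  proof -
    have "a \<bullet> p < b" using strict that by auto
    moreover have "norm a + 1 > 0" by (simp add: add_nonneg_pos)
    ultimately show ?thesis by simp
  qed
  have r0: "r > 0" unfolding r_def
    using fin by (subst Min_gr_iff) (auto simp: pos)
  have rle: "r \<le> (b - a \<bullet> p) / (norm a + 1)" if "(a,b) \<in> I1" for a b
    unfolding r_def using fin that by (intro Min_le) force+
  have "ball p r \<inter> affine hull F \<subseteq> F"
  proof
    fix y assume y: "y \<in> ball p r \<inter> affine hull F"
    have ny: "n \<bullet> y = h" using y affF by auto
    have "\<forall>(a,b)\<in>I1. a \<bullet> y \<le> b"
    proof (clarify)
      fix a b assume ab: "(a,b) \<in> I1"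
      have "a \<bullet> y - a \<bullet> p = a \<bullet> (y - p)" by (simp add: inner_diff_right)
      also have "\<dots> \<le> norm a * norm (y - p)" by (rule norm_cauchy_schwarz)
      also have "\<dots> \<le> (norm a + 1) * r"
      proof -
        have "norm (y - p) < r" using y by (simp add: dist_norm norm_minus_commute)
        then show ?thesis by (intro mult_mono) auto
      qed
      also have "\<dots> \<le> b - a \<bullet> p"
      proof -
        have "0 < norm a + 1" by (simp add: add_nonneg_pos)
        then show ?thesis using rle[OF ab] by (simp add: pos_le_divide_eq mult.commute)
      qed
      finally show "a \<bullet> y \<le> b" by simp
    qed
    then show "y \<in> F" using hyper_in_F ny by blast
  qed
  then show ?thesis using pF r0 mem_rel_interior_ball by blast
qed

lemma eta_xe: "\<epsilon> > 0 \<Longrightarrow> eta (xe \<epsilon>) = \<epsilon> * (n \<bullet> n)"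
  by (simp add: eta_def xe_def inner_add_right nc)

lemma xe_I1:
  assumes "good \<epsilon>" "(a,b) \<in> I1"
  shows "a \<bullet> xe \<epsilon> \<le> b"
proof -
  have "\<epsilon> * \<bar>a \<bullet> n\<bar> \<le> (b - a \<bullet> c) / 2" "a \<bullet> c < b" using assms by (auto simp: good_def I1_def)
  moreover have "\<epsilon> * (a \<bullet> n) \<le> \<epsilon> * \<bar>a \<bullet> n\<bar>" using assms(1) by (simp add: good_def)
  ultimately show ?thesis by (simp add: xe_def inner_add_right)
qed

lemma line_comb:
  fixes p d :: "'a"
  shows "(1 - \<tau>) *\<^sub>R (p + s *\<^sub>R d) + \<tau> *\<^sub>R (p + d) = p + ((1 - \<tau>) * s + \<tau>) *\<^sub>R d"
  by (simp add: algebra_simps)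

lemma cap:
  assumes gd: "good \<epsilon>" and y: "y \<in> Ce \<epsilon>"
  shows "eta y \<le> 0 \<Longrightarrow> y \<in> P"
    and "0 < eta y \<Longrightarrow> \<exists>f\<in>F. y = (1 - eta y / eta (xe \<epsilon>)) *\<^sub>R f + (eta y / eta (xe \<epsilon>)) *\<^sub>R xe \<epsilon>"
    and "eta y \<le> eta (xe \<epsilon>)"
proof -
  have e0: "\<epsilon> > 0" using gd by (simp add: good_def)
  define x where "x = xe \<epsilon>"
  have ex: "eta x > 0" using eta_xe[OF e0] e0 nn_pos by (simp add: x_def)
  have "P \<noteq> {}" using cinP by blast
  then obtain u v p where uv: "u \<ge> 0" "v \<ge> 0" "u + v = 1" "p \<in> convex hull P" "y = u *\<^sub>R x + v *\<^sub>R p"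
    using y unfolding Ce_def convex_hull_insert[OF \<open>P \<noteq> {}\<close>] x_def by blast
  have pP: "p \<in> P" using uv(4) hull_same[of convex P, OF convexP] by simp
  define t where "t = u"
  define d where "d = x - p"
  have "v = 1 - u" using uv by simp
  then have "y = u *\<^sub>R x + (1 - u) *\<^sub>R p" using uv(5) by simp
  then have yt: "y = p + t *\<^sub>R d" by (simp add: t_def d_def algebra_simps)
  have t01: "0 \<le> t" "t \<le> 1" using uv by (auto simp: t_def)
  have ep: "eta p \<le> 0" using pP Psub by (auto simp: eta_def)
  define E where "E = eta x - eta p"
  have E0: "E > 0" using ex ep by (simp add: E_def)
  have eta_line: "eta (p + r *\<^sub>R d) = eta p + r * E" for r
    by (simp add: eta_def E_def d_def inner_add_right inner_diff_right algebra_simps)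
  define s where "s = - eta p / E"
  have s01: "0 \<le> s" "s < 1" using ep E0 ex by (auto simp: s_def E_def field_simps)
  define f where "f = p + s *\<^sub>R d"
  have ef: "eta f = 0" unfolding f_def eta_line using E0 by (simp add: s_def)
  have fI1: "\<forall>(a,b)\<in>I1. a \<bullet> f \<le> b"
  proof clarify
    fix a b assume ab: "(a,b) \<in> I1"
    have "a \<bullet> p \<le> b" using ab pP inP by (auto simp: I1_def)
    moreover have "a \<bullet> x \<le> b" using xe_I1[OF gd ab] by (simp add: x_def)
    ultimately have "(1 - s) * (a \<bullet> p) + s * (a \<bullet> x) \<le> (1 - s) * b + s * b"
      using s01 by (intro add_mono mult_left_mono) auto
    moreover have "a \<bullet> f = (1 - s) * (a \<bullet> p) + s * (a \<bullet> x)"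
      by (simp add: f_def d_def inner_add_right inner_diff_right algebra_simps)
    ultimately show "a \<bullet> f \<le> b" by (simp add: algebra_simps)
  qed
  have fF: "f \<in> F" using hyper_in_F ef fI1 by (simp add: eta_def)
  have ey: "eta y = eta p + t * E" using yt eta_line by simp
  have "t * E \<le> E" using t01 E0 by (simp add: mult_left_le_one_le)
  then have "eta y \<le> eta x" using ey by (simp add: E_def)
  then show "eta y \<le> eta (xe \<epsilon>)" by (simp add: x_def)
  show "y \<in> P" if "eta y \<le> 0"
  proof (cases "s = 0")
    case True
    then have "eta p = 0" using E0 by (simp add: s_def)
    then have "t * E \<le> 0" using that ey by simp
    then have "t \<le> 0" using E0 by (simp add: mult_le_0_iff)
    then have "t = 0" using t01 by simp
    then show ?thesis using yt pP by simp
  next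
    case False
    then have s0: "s > 0" using s01 by simp
    have ts: "t \<le> s" using that ey E0 by (simp add: s_def field_simps)
    have "y = (1 - t/s) *\<^sub>R p + (t/s) *\<^sub>R f"
      using s0 by (simp add: yt f_def algebra_simps)
    moreover have "0 \<le> t/s" "t/s \<le> 1" using ts s0 t01 by auto
    moreover have "f \<in> P" using fF FsubP by blast
    ultimately show ?thesis using convexP pP by (simp add: convex_def)
  qed
  show "\<exists>f\<in>F. y = (1 - eta y / eta (xe \<epsilon>)) *\<^sub>R f + (eta y / eta (xe \<epsilon>)) *\<^sub>R xe \<epsilon>" if "0 < eta y"
  proof (intro bexI[OF _ fF])
    define \<tau> where "\<tau> = eta y / eta x"
    have ex2: "eta x = (1 - s) * E" using E0 by (simp add: s_def E_def field_simps)
    have ey2: "eta y = (t - s) * E" using ey E0 by (simp add: s_def field_simps)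
    have "\<tau> = (t - s) * E / ((1 - s) * E)" unfolding \<tau>_def ex2 ey2 by simp
    also have "\<dots> = (t - s) / (1 - s)" using E0 by simp
    finally have tau: "\<tau> = (t - s) / (1 - s)" .
    have "\<tau> * (1 - s) = t - s" using s01 by (simp add: tau)
    then have "(1 - \<tau>) * s + \<tau> = t" by (simp add: algebra_simps)
    then have "(1 - \<tau>) *\<^sub>R f + \<tau> *\<^sub>R x = y"
      using line_comb[of \<tau> p s d] yt by (simp add: f_def d_def)
    then show "y = (1 - eta y / eta (xe \<epsilon>)) *\<^sub>R f + (eta y / eta (xe \<epsilon>)) *\<^sub>R xe \<epsilon>"
      by (simp add: \<tau>_def x_def)
  qed
qed

lemma convex_Ce: "convex (Ce \<epsilon>)" by (simp add: Ce_def convex_convex_hull)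
lemma P_Ce: "P \<subseteq> Ce \<epsilon>" unfolding Ce_def by (meson hull_subset subset_insertI subset_trans)
lemma xe_Ce: "xe \<epsilon> \<in> Ce \<epsilon>" unfolding Ce_def by (simp add: hull_inc)

lemma ev_good: "eventually good (at_right 0)"
proof -
  have "eventually (\<lambda>\<epsilon>. \<forall>ab\<in>I1. \<epsilon> * \<bar>fst ab \<bullet> n\<bar> \<le> (snd ab - fst ab \<bullet> c) / 2) (at_right 0)"
  proof (rule eventually_ball_finite[OF finI1], intro ballI)
    fix ab assume "ab \<in> I1"
    then have "(snd ab - fst ab \<bullet> c) / 2 > 0" by (auto simp: I1_def)
    then show "eventually (\<lambda>\<epsilon>. \<epsilon> * \<bar>fst ab \<bullet> n\<bar> \<le> (snd ab - fst ab \<bullet> c) / 2) (at_right 0)"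
      by (intro ev_small) auto
  qed
  then show ?thesis using ev_pos unfolding good_def
    by eventually_elim auto
qed

end



context fsetup
begin

lemma uf_nonneg: "j \<in> J \<Longrightarrow> y \<in> P \<Longrightarrow> 0 \<le> uf j y"
  using inP by (auto simp: J_def I1_def uf_def)

lemma W_lemma:
  assumes D: "D > 0"
   and H1: "\<And>p t. p \<in> P \<Longrightarrow> p + t *\<^sub>R g \<in> P \<Longrightarrow> 0 \<le> t \<Longrightarrow> t \<le> D"
   and H2: "\<And>p. p \<in> P \<Longrightarrow> p + D *\<^sub>R g \<in> P \<Longrightarrow> p + D *\<^sub>R g \<notin> rel_interior F"
  shows "\<exists>\<alpha>>0. \<forall>p t j. p \<in> F \<longrightarrow> 0 \<le> t \<longrightarrow> p - t *\<^sub>R g \<in> P \<longrightarrow> j \<in> J \<longrightarrow>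
            (\<forall>i\<in>J. uf j p \<le> uf i p) \<longrightarrow> t + \<alpha> * uf j p \<le> D"
proof -
  define W where "W j = {z. fst z \<in> F \<and> 0 \<le> snd z \<and> fst z - snd z *\<^sub>R g \<in> P \<and> (\<forall>i\<in>J. uf j (fst z) \<le> uf i (fst z))}" for j
  have tD: "snd z \<le> D" if "z \<in> W j" for z j
  proof -
    have "fst z - snd z *\<^sub>R g \<in> P" "fst z \<in> P" "0 \<le> snd z" using that FsubP by (auto simp: W_def)
    then show ?thesis using H1[of "fst z - snd z *\<^sub>R g" "snd z"] by simp
  qed
  have Wj: "\<exists>\<alpha>j>0. \<forall>z\<in>W j. snd z + \<alpha>j * uf j (fst z) \<le> D" if jJ: "j \<in> J" for j
  proof -
    have Weq: "W j = (\<Inter>ab\<in>K. {z. (fst ab, 0) \<bullet> z \<le> snd ab}) \<inter> {z. (n, 0) \<bullet> z \<le> h} \<inter> {z. (-n, 0) \<bullet> z \<le> -h}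
        \<inter> {z. (0, -1) \<bullet> z \<le> 0} \<inter> (\<Inter>ab\<in>K. {z. (fst ab, - (fst ab \<bullet> g)) \<bullet> z \<le> snd ab})
        \<inter> (\<Inter>i\<in>J. {z. (fst i - fst j, 0) \<bullet> z \<le> snd i - snd j})"
      (is "_ = ?R")
    proof (intro equalityI subsetI)
      fix z assume "z \<in> W j"
      then have z: "fst z \<in> P" "n \<bullet> fst z = h" "0 \<le> snd z" "fst z - snd z *\<^sub>R g \<in> P"
        "\<forall>i\<in>J. uf j (fst z) \<le> uf i (fst z)" by (auto simp: W_def Fdef)
      obtain p t where zpt: "z = (p, t)" by fastforce
      have "\<forall>ab\<in>K. fst ab \<bullet> p \<le> snd ab" using z(1) inP zpt by auto
      moreover have "\<forall>ab\<in>K. fst ab \<bullet> p - t * (fst ab \<bullet> g) \<le> snd ab"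
        using z(4) inP zpt by (auto simp: inner_diff_right)
      moreover have "\<forall>i\<in>J. (fst i - fst j) \<bullet> p \<le> snd i - snd j"
        using z(5) zpt by (auto simp: uf_def inner_diff_left)
      ultimately show "z \<in> ?R" using z(2,3) zpt by (force simp: mult.commute)
    next
      fix z assume zR: "z \<in> ?R"
      obtain p t where zpt: "z = (p, t)" by fastforce
      have a1: "\<forall>ab\<in>K. fst ab \<bullet> p \<le> snd ab" and a2: "n \<bullet> p = h" and a3: "0 \<le> t"
        and a4: "\<forall>ab\<in>K. fst ab \<bullet> p - (fst ab \<bullet> g) * t \<le> snd ab"
        and a5: "\<forall>i\<in>J. (fst i - fst j) \<bullet> p \<le> snd i - snd j"
        using zR zpt by auto
      have "p \<in> P" using a1 inP by auto
      moreover have "p - t *\<^sub>R g \<in> P" unfolding inP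
      proof clarify
        fix a b assume ab: "(a,b) \<in> K"
        have "fst (a,b) \<bullet> p - (fst (a,b) \<bullet> g) * t \<le> snd (a,b)" using a4 ab by blast
        then show "a \<bullet> (p - t *\<^sub>R g) \<le> b" by (simp add: inner_diff_right mult.commute)
      qed
      moreover have "\<forall>i\<in>J. uf j p \<le> uf i p" using a5 by (auto simp: uf_def inner_diff_left)
      ultimately show "z \<in> W j" using a2 a3 zpt by (auto simp: W_def Fdef)
    qed
    have "polyhedron (W j)" unfolding Weq
      by (intro polyhedron_Int polyhedron_INT finK finJ polyhedron_halfspace_le)
    moreover have "bounded (W j)"
    proof -
      have "W j \<subseteq> F \<times> {0..D}"
      proof
        fix z assume zW: "z \<in> W j"
        have "snd z \<le> D" using tD[OF zW] .
        moreover have "fst z \<in> F" "0 \<le> snd z" using zW by (auto simp: W_def)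
        ultimately show "z \<in> F \<times> {0..D}" by (cases z) auto
      qed
      moreover have "bounded F" using bndP FsubP bounded_subset by blast
      ultimately show ?thesis using bounded_Times bounded_subset bounded_closed_interval by metis
    qed
    ultimately have "polytope (W j)" by (simp add: polytope_eq_bounded_polyhedron)
    then obtain V where finV: "finite V" and WV: "W j = convex hull V" unfolding polytope_def by blast
    have VW: "V \<subseteq> W j" unfolding WV by (rule hull_subset)
    define S where "S = (\<lambda>z. (D - snd z) / uf j (fst z)) ` {z\<in>V. uf j (fst z) > 0}"
    have finS: "finite (insert 1 S)" using finV by (simp add: S_def)
    have Spos: "s > 0" if sS: "s \<in> S" for s
    proof -
      obtain z where z: "z \<in> V" "uf j (fst z) > 0" "s = (D - snd z) / uf j (fst z)"
        using sS unfolding S_def by blast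
      have zW: "z \<in> W j" using z VW by blast
      then have zz: "fst z \<in> F" "0 \<le> snd z" "fst z - snd z *\<^sub>R g \<in> P" "\<forall>i\<in>J. uf j (fst z) \<le> uf i (fst z)"
        by (auto simp: W_def)
      have "\<forall>(a,b)\<in>I1. a \<bullet> fst z < b"
      proof clarify
        fix a b assume "(a,b) \<in> I1"
        then have "(a,b) \<in> J" by (simp add: J_def)
        then have "uf j (fst z) \<le> uf (a,b) (fst z)" using zz by blast
        then show "a \<bullet> fst z < b" using z(2) by (simp add: uf_def)
      qed
      then have ri: "fst z \<in> rel_interior F" using relint_crit zz(1) by blast
      have "snd z \<noteq> D"
      proof
        assume "snd z = D"
        then have "(fst z - D *\<^sub>R g) + D *\<^sub>R g \<notin> rel_interior F"
          using H2[of "fst z - D *\<^sub>R g"] zz FsubP by auto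
        then show False using ri by simp
      qed
      then have "snd z < D" using tD[OF zW] by simp
      then show ?thesis using z by simp
    qed
    define \<alpha>j where "\<alpha>j = Min (insert 1 S)"
    have aj0: "\<alpha>j > 0" unfolding \<alpha>j_def using finS Spos by (subst Min_gr_iff) auto
    have onV: "snd z + \<alpha>j * uf j (fst z) \<le> D" if "z \<in> V" for z
    proof (cases "uf j (fst z) > 0")
      case True
      then have "(D - snd z) / uf j (fst z) \<in> S" using that by (auto simp: S_def)
      then have "\<alpha>j \<le> (D - snd z) / uf j (fst z)" unfolding \<alpha>j_def using finS by (intro Min_le) auto
      then have "\<alpha>j * uf j (fst z) \<le> D - snd z" using True by (simp add: le_divide_eq)
      then show ?thesis by simp
    next
      case False
      have "fst z \<in> P" using that VW FsubP by (auto simp: W_def)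
      then have "uf j (fst z) = 0" using False uf_nonneg[OF jJ] by force
      then show ?thesis using tD[of z j] that VW by auto
    qed
    define H where "H = {z::'a \<times> real. (- (\<alpha>j *\<^sub>R fst j), 1::real) \<bullet> z \<le> D - \<alpha>j * snd j}"
    have Hiff: "z \<in> H \<longleftrightarrow> snd z + \<alpha>j * uf j (fst z) \<le> D" for z :: "'a \<times> real"
    proof -
      obtain p t where "z = (p, t)" by fastforce
      then show ?thesis by (simp add: H_def uf_def algebra_simps)
    qed
    have "V \<subseteq> H" using onV Hiff by blast
    moreover have "convex H" unfolding H_def by (rule convex_halfspace_le)
    ultimately have "W j \<subseteq> H" unfolding WV by (rule hull_minimal)
    then show ?thesis using aj0 Hiff by blast
  qed
  then obtain af where af: "\<And>j. j \<in> J \<Longrightarrow> af j > 0 \<and> (\<forall>z\<in>W j. snd z + af j * uf j (fst z) \<le> D)"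
    by metis
  define \<alpha> where "\<alpha> = Min (af ` J)"
  have JnE: "J \<noteq> {}" by (simp add: J_def)
  have a0: "\<alpha> > 0" unfolding \<alpha>_def using finJ JnE af by (subst Min_gr_iff) auto
  have ale: "\<alpha> \<le> af j" if "j \<in> J" for j unfolding \<alpha>_def using finJ that by (intro Min_le) auto
  show ?thesis
  proof (intro exI[of _ \<alpha>] conjI allI impI)
    show "\<alpha> > 0" by (rule a0)
    fix p t j assume p: "p \<in> F" "0 \<le> t" "p - t *\<^sub>R g \<in> P" "j \<in> J" "\<forall>i\<in>J. uf j p \<le> uf i p"
    then have "(p, t) \<in> W j" by (simp add: W_def)
    then have "t + af j * uf j p \<le> D" using af[OF p(4)] by force
    moreover have "\<alpha> * uf j p \<le> af j * uf j p"
      using ale[OF p(4)] uf_nonneg[OF p(4)] p(1) FsubP by (intro mult_right_mono) auto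
    ultimately show "t + \<alpha> * uf j p \<le> D" by linarith
  qed
qed

end



context fsetup
begin

lemma chord_pos:
  assumes D: "D > 0" and gn: "g \<bullet> n > 0"
   and H1: "\<And>p t. p \<in> P \<Longrightarrow> p + t *\<^sub>R g \<in> P \<Longrightarrow> 0 \<le> t \<Longrightarrow> t \<le> D"
   and H2: "\<And>p. p \<in> P \<Longrightarrow> p + D *\<^sub>R g \<in> P \<Longrightarrow> p + D *\<^sub>R g \<notin> rel_interior F"
  shows "eventually (\<lambda>\<epsilon>. \<forall>a' t. 0 \<le> t \<longrightarrow> a' \<in> Ce \<epsilon> \<longrightarrow> a' + t *\<^sub>R g \<in> Ce \<epsilon> \<longrightarrow> t \<le> D) (at_right 0)"
proof -
  obtain \<alpha> where a0: "\<alpha> > 0" and W\<alpha>: "\<And>p t j. p \<in> F \<Longrightarrow> 0 \<le> t \<Longrightarrow> p - t *\<^sub>R g \<in> P \<Longrightarrow> j \<in> J \<Longrightarrow>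
            (\<forall>i\<in>J. uf j p \<le> uf i p) \<Longrightarrow> t + \<alpha> * uf j p \<le> D"
  proof -
    have "\<exists>\<alpha>>0. \<forall>p t j. p \<in> F \<longrightarrow> 0 \<le> t \<longrightarrow> p - t *\<^sub>R g \<in> P \<longrightarrow> j \<in> J \<longrightarrow>
            (\<forall>i\<in>J. uf j p \<le> uf i p) \<longrightarrow> t + \<alpha> * uf j p \<le> D"
    proof (rule W_lemma)
      show "D > 0" by (rule D)
      show "\<And>p t. p \<in> P \<Longrightarrow> p + t *\<^sub>R g \<in> P \<Longrightarrow> 0 \<le> t \<Longrightarrow> t \<le> D" using H1 by blast
      show "\<And>p. p \<in> P \<Longrightarrow> p + D *\<^sub>R g \<in> P \<Longrightarrow> p + D *\<^sub>R g \<notin> rel_interior F" using H2 by blast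
    qed
    then show ?thesis using that by blast
  qed
  define NN where "NN = n \<bullet> n"
  define GN where "GN = g \<bullet> n"
  have NN0: "NN > 0" using nn_pos by (simp add: NN_def)
  have GN0: "GN > 0" using gn by (simp add: GN_def)
  have ev1: "eventually (\<lambda>\<epsilon>. \<epsilon> * NN \<le> D * GN) (at_right 0)"
    using NN0 GN0 D by (intro ev_small) auto
  have ev2: "eventually (\<lambda>\<epsilon>. \<epsilon> * NN \<le> \<alpha> * GN) (at_right 0)"
    using NN0 GN0 a0 by (intro ev_small) auto
  have ev3: "eventually (\<lambda>\<epsilon>. \<forall>ab\<in>I1. \<epsilon> * (NN * (1/\<alpha> + \<bar>fst ab \<bullet> g\<bar>)) \<le> GN * (snd ab - fst ab \<bullet> c) / 2) (at_right 0)"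
  proof (rule eventually_ball_finite[OF finI1], intro ballI)
    fix ab assume "ab \<in> I1"
    then have "snd ab - fst ab \<bullet> c > 0" by (auto simp: I1_def)
    then have "GN * (snd ab - fst ab \<bullet> c) / 2 > 0" using GN0 by simp
    moreover have "NN * (1/\<alpha> + \<bar>fst ab \<bullet> g\<bar>) \<ge> 0" using NN0 a0 by simp
    ultimately show "eventually (\<lambda>\<epsilon>. \<epsilon> * (NN * (1/\<alpha> + \<bar>fst ab \<bullet> g\<bar>)) \<le> GN * (snd ab - fst ab \<bullet> c) / 2) (at_right 0)"
      by (intro ev_small) auto
  qed
  have "eventually (\<lambda>\<epsilon>. good \<epsilon> \<and> \<epsilon> * NN \<le> D * GN \<and> \<epsilon> * NN \<le> \<alpha> * GN \<and>
      (\<forall>ab\<in>I1. \<epsilon> * (NN * (1/\<alpha> + \<bar>fst ab \<bullet> g\<bar>)) \<le> GN * (snd ab - fst ab \<bullet> c) / 2)) (at_right 0)"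
    using ev_good ev1 ev2 ev3 by eventually_elim auto
  then show ?thesis
  proof (rule eventually_mono)
    fix \<epsilon> assume E: "good \<epsilon> \<and> \<epsilon> * NN \<le> D * GN \<and> \<epsilon> * NN \<le> \<alpha> * GN \<and>
      (\<forall>ab\<in>I1. \<epsilon> * (NN * (1/\<alpha> + \<bar>fst ab \<bullet> g\<bar>)) \<le> GN * (snd ab - fst ab \<bullet> c) / 2)"
    then have gd: "good \<epsilon>" and E1: "\<epsilon> * NN \<le> D * GN" and E2: "\<epsilon> * NN \<le> \<alpha> * GN"
      and E3: "\<And>ab. ab \<in> I1 \<Longrightarrow> \<epsilon> * (NN * (1/\<alpha> + \<bar>fst ab \<bullet> g\<bar>)) \<le> GN * (snd ab - fst ab \<bullet> c) / 2"
      by auto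
    have e0: "\<epsilon> > 0" using gd by (simp add: good_def)
    have ex: "eta (xe \<epsilon>) = \<epsilon> * NN" using eta_xe[OF e0] by (simp add: NN_def)
    have eNN: "\<epsilon> * NN > 0" using e0 NN0 by simp
    show "\<forall>a' t. 0 \<le> t \<longrightarrow> a' \<in> Ce \<epsilon> \<longrightarrow> a' + t *\<^sub>R g \<in> Ce \<epsilon> \<longrightarrow> t \<le> D"
    proof (intro allI impI)
      fix a' t assume t0: "0 \<le> t" and a'C: "a' \<in> Ce \<epsilon>" and bC: "a' + t *\<^sub>R g \<in> Ce \<epsilon>"
      define bb where "bb = a' + t *\<^sub>R g"
      have bbC: "bb \<in> Ce \<epsilon>" using bC by (simp add: bb_def)
      have eb: "eta bb = eta a' + t * GN"
        by (simp add: bb_def eta_def inner_add_right GN_def inner_commute)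
      have tGN: "t * GN \<ge> 0" using t0 GN0 by simp
      consider (A) "eta bb \<le> 0" | (B) "eta a' \<ge> 0" "eta bb > 0" | (C) "eta a' < 0" "eta bb > 0" by linarith
      then show "t \<le> D"
      proof cases
        case A
        then have "eta a' \<le> 0" using eb tGN by linarith
        then have "a' \<in> P" using cap(1)[OF gd a'C] by blast
        moreover have "bb \<in> P" using cap(1)[OF gd bbC] A by blast
        ultimately show ?thesis using H1 t0 by (simp add: bb_def)
      next
        case B
        have "eta bb \<le> \<epsilon> * NN" using cap(3)[OF gd bbC] ex by simp
        then have "t * GN \<le> D * GN" using eb B E1 by linarith
        then show ?thesis using GN0 by (simp add: mult_right_le_imp_le)
      next
        case C
        define t1 where "t1 = - eta a' / GN"
        have t1GN: "t1 * GN = - eta a'" using GN0 by (simp add: t1_def)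
        have "eta a' / GN < 0" using C GN0 by (simp add: divide_neg_pos)
        then have t1p: "t1 > 0" by (simp add: t1_def)
        have "t1 * GN < t * GN" using t1GN eb C by linarith
        then have t1t: "t1 < t" using GN0 by simp
        define p where "p = a' + t1 *\<^sub>R g"
        have ep: "eta p = 0" using t1GN
          by (simp add: p_def eta_def inner_add_right GN_def inner_commute)
        have "p = (1 - t1/t) *\<^sub>R a' + (t1/t) *\<^sub>R bb"
          using t1t t1p by (simp add: p_def bb_def algebra_simps)
        moreover have "0 \<le> t1/t" "t1/t \<le> 1" using t1t t1p by auto
        ultimately have pC: "p \<in> Ce \<epsilon>" using convex_Ce a'C bbC
          by (simp add: convex_def)
        have pP: "p \<in> P" using cap(1)[OF gd pC] ep by simp
        have pF: "p \<in> F" using pP ep by (simp add: Fdef eta_def)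
        have a'P: "a' \<in> P" using cap(1)[OF gd a'C] C by simp
        define t2 where "t2 = t - t1"
        have t2p: "t2 > 0" using t1t by (simp add: t2_def)
        have bbp: "bb = p + t2 *\<^sub>R g" by (simp add: bb_def p_def t2_def algebra_simps)
        have ebb: "eta bb = t2 * GN" using eb t1GN by (simp add: t2_def algebra_simps)
        define \<tau> where "\<tau> = eta bb / eta (xe \<epsilon>)"
        obtain f where fF: "f \<in> F" and bbf: "bb = (1 - \<tau>) *\<^sub>R f + \<tau> *\<^sub>R xe \<epsilon>"
          using cap(2)[OF gd bbC] C by (auto simp: \<tau>_def)
        have tau: "\<tau> = t2 * GN / (\<epsilon> * NN)" by (simp add: \<tau>_def ebb ex)
        have tau0: "\<tau> \<ge> 0" using tau t2p GN0 eNN by simp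
        have tau1: "\<tau> \<le> 1" using cap(3)[OF gd bbC] ex eNN by (simp add: \<tau>_def)
        have "\<exists>j\<in>J. \<forall>i\<in>J. uf j p \<le> uf i p"
        proof -
          have "finite ((\<lambda>i. uf i p) ` J)" "(\<lambda>i. uf i p) ` J \<noteq> {}" using finJ by (auto simp: J_def)
          then have "Min ((\<lambda>i. uf i p) ` J) \<in> (\<lambda>i. uf i p) ` J" by (rule Min_in)
          then obtain j where j: "j \<in> J" "uf j p = Min ((\<lambda>i. uf i p) ` J)" by auto
          have "\<forall>i\<in>J. uf j p \<le> uf i p" using j finJ by auto
          then show ?thesis using j by blast
        qed
        then obtain j where jJ: "j \<in> J" and jmin: "\<forall>i\<in>J. uf j p \<le> uf i p" by blast
        have "p - t1 *\<^sub>R g = a'" by (simp add: p_def)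
        then have Wt1: "t1 + \<alpha> * uf j p \<le> D" using W\<alpha>[OF pF _ _ jJ jmin] t1p a'P by simp
        have "t2 \<le> \<alpha> * uf j p"
        proof (cases "j = (0,1)")
          case True
          have "t2 * GN \<le> \<epsilon> * NN" using cap(3)[OF gd bbC] ex ebb by simp
          then have "t2 * GN \<le> \<alpha> * GN" using E2 by linarith
          then have "t2 \<le> \<alpha>" using GN0 by (simp add: mult_right_le_imp_le)
          then show ?thesis using True by (simp add: uf_def)
        next
          case False
          then have jI1: "j \<in> I1" using jJ by (simp add: J_def)
          obtain a b where jab: "j = (a, b)" by fastforce
          have abK: "(a,b) \<in> K" and acb: "a \<bullet> c < b" using jI1 jab by (auto simp: I1_def)
          have "f \<in> P" using fF FsubP by blast
          then have afb: "a \<bullet> f \<le> b" using abK unfolding inP by blast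
          have an: "\<epsilon> * (a \<bullet> n) \<le> (b - a \<bullet> c) / 2"
          proof -
            have "\<epsilon> * \<bar>a \<bullet> n\<bar> \<le> (b - a \<bullet> c) / 2" using gd jI1 jab by (auto simp: good_def)
            moreover have "\<epsilon> * (a \<bullet> n) \<le> \<epsilon> * \<bar>a \<bullet> n\<bar>" using e0 by (simp add: mult_left_mono)
            ultimately show ?thesis by linarith
          qed
          have X1: "a \<bullet> bb = (1 - \<tau>) * (a \<bullet> f) + \<tau> * (a \<bullet> c + \<epsilon> * (a \<bullet> n))"
            by (simp add: bbf xe_def inner_add_right)
          have X2: "a \<bullet> bb = a \<bullet> p + t2 * (a \<bullet> g)" by (simp add: bbp inner_add_right)
          have X3: "(1 - \<tau>) * (a \<bullet> f) \<le> (1 - \<tau>) * b" using afb tau1 by (simp add: mult_left_mono)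
          have X4: "\<tau> * (a \<bullet> c + \<epsilon> * (a \<bullet> n)) \<le> \<tau> * (a \<bullet> c + (b - a \<bullet> c) / 2)"
            using an tau0 by (intro mult_left_mono) auto
          have X5: "(1 - \<tau>) * b + \<tau> * (a \<bullet> c + (b - a \<bullet> c) / 2) = b - \<tau> * ((b - a \<bullet> c) / 2)"
            by (simp add: algebra_simps)
          from X1 X2 X3 X4 X5 have ineq: "a \<bullet> p + t2 * (a \<bullet> g) \<le> b - \<tau> * ((b - a \<bullet> c) / 2)"
            by linarith
          define Q where "Q = GN * (b - a \<bullet> c) / (2 * (\<epsilon> * NN))"
          have tQ: "\<tau> * ((b - a \<bullet> c) / 2) = t2 * Q" by (simp add: tau Q_def)
          define X where "X = 1/\<alpha> + \<bar>a \<bullet> g\<bar>"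
          have q1: "\<epsilon> * (NN * X) \<le> GN * (b - a \<bullet> c) / 2" using E3[OF jI1] jab by (simp add: X_def)
          have q2: "X * (2 * (\<epsilon> * NN)) = 2 * (\<epsilon> * (NN * X))" by (simp add: algebra_simps)
          have q3: "X * (2 * (\<epsilon> * NN)) \<le> GN * (b - a \<bullet> c)" using q1 q2 by linarith
          have pos2: "0 < 2 * (\<epsilon> * NN)" using eNN by simp
          have "X \<le> GN * (b - a \<bullet> c) / (2 * (\<epsilon> * NN))" using q3 by (simp only: pos_le_divide_eq[OF pos2])
          then have Qge: "1/\<alpha> + \<bar>a \<bullet> g\<bar> \<le> Q" by (simp add: Q_def X_def)
          have "t2 * (1/\<alpha> + \<bar>a \<bullet> g\<bar>) \<le> t2 * Q" using Qge t2p by (simp add: mult_left_mono)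
          moreover have "t2 * (a \<bullet> g) + t2 * \<bar>a \<bullet> g\<bar> \<ge> 0"
          proof -
            have "a \<bullet> g + \<bar>a \<bullet> g\<bar> \<ge> 0" by linarith
            then have "t2 * (a \<bullet> g + \<bar>a \<bullet> g\<bar>) \<ge> 0" using t2p by simp
            then show ?thesis by (simp add: distrib_left)
          qed
          ultimately have "t2 / \<alpha> \<le> b - a \<bullet> p" using ineq tQ by (simp add: distrib_left)
          then have "t2 \<le> \<alpha> * (b - a \<bullet> p)" using a0 by (simp add: divide_le_eq mult.commute)
          then show ?thesis using jab by (simp add: uf_def)
        qed
        then show ?thesis using Wt1 t2_def by linarith
      qed
    qed
  qed
qed

lemma chord_zero:
  assumes gn: "g \<bullet> n = 0"
   and H1: "\<And>p t. p \<in> P \<Longrightarrow> p + t *\<^sub>R g \<in> P \<Longrightarrow> 0 \<le> t \<Longrightarrow> t \<le> D"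
   and gd: "good \<epsilon>" and t0: "0 \<le> t" and a'C: "a' \<in> Ce \<epsilon>" and bC: "a' + t *\<^sub>R g \<in> Ce \<epsilon>"
  shows "t \<le> D"
proof -
  have D0: "0 \<le> D" using H1[of c 0] cinP by simp
  have ee: "eta (a' + t *\<^sub>R g) = eta a'"
    using gn by (simp add: eta_def inner_add_right inner_commute)
  show ?thesis
  proof (cases "eta a' \<le> 0")
    case True
    then have "a' \<in> P" "a' + t *\<^sub>R g \<in> P" using cap(1)[OF gd a'C] cap(1)[OF gd bC] ee by auto
    then show ?thesis using H1 t0 by blast
  next
    case False
    have e0: "\<epsilon> > 0" using gd by (simp add: good_def)
    have ex: "eta (xe \<epsilon>) > 0" using eta_xe[OF e0] e0 nn_pos by simp
    define \<tau> where "\<tau> = eta a' / eta (xe \<epsilon>)"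
    obtain f1 where f1: "f1 \<in> F" "a' = (1 - \<tau>) *\<^sub>R f1 + \<tau> *\<^sub>R xe \<epsilon>"
      using cap(2)[OF gd a'C] False by (auto simp: \<tau>_def)
    obtain f2 where f2: "f2 \<in> F" "a' + t *\<^sub>R g = (1 - \<tau>) *\<^sub>R f2 + \<tau> *\<^sub>R xe \<epsilon>"
      using cap(2)[OF gd bC] False ee by (auto simp: \<tau>_def)
    have tau1: "\<tau> \<le> 1" using cap(3)[OF gd a'C] ex by (simp add: \<tau>_def)
    have tau0: "\<tau> > 0" using False ex by (simp add: \<tau>_def)
    have tg: "t *\<^sub>R g = (1 - \<tau>) *\<^sub>R (f2 - f1)"
    proof -
      have "t *\<^sub>R g = (a' + t *\<^sub>R g) - a'" by simp
      also have "\<dots> = ((1 - \<tau>) *\<^sub>R f2 + \<tau> *\<^sub>R xe \<epsilon>) - ((1 - \<tau>) *\<^sub>R f1 + \<tau> *\<^sub>R xe \<epsilon>)"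
        by (subst f2(2)[symmetric], subst f1(2)[symmetric], rule refl)
      also have "\<dots> = (1 - \<tau>) *\<^sub>R (f2 - f1)" by (simp add: algebra_simps)
      finally show ?thesis .
    qed
    show ?thesis
    proof (cases "\<tau> = 1")
      case True
      then have "t *\<^sub>R g = 0" using tg by simp
      then have "t = 0 \<or> g = 0" by simp
      then show ?thesis
      proof
        assume "t = 0" then show ?thesis using D0 by simp
      next
        assume "g = 0" then show ?thesis using H1[of c t] cinP t0 by simp
      qed
    next
      case False
      then have tl: "1 - \<tau> > 0" using tau1 by simp
      have "f2 = f1 + (t / (1 - \<tau>)) *\<^sub>R g"
      proof -
        have "(t / (1 - \<tau>)) *\<^sub>R g = (1 / (1 - \<tau>)) *\<^sub>R (t *\<^sub>R g)" by simp
        also have "\<dots> = f2 - f1" using tl by (simp add: tg)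
        finally show ?thesis by simp
      qed
      then have "t / (1 - \<tau>) \<le> D" using H1[of f1 "t / (1 - \<tau>)"] f1(1) f2(1) FsubP t0 tl by auto
      then have "t \<le> D * (1 - \<tau>)" using tl by (simp add: divide_le_eq)
      also have "\<dots> \<le> D" using D0 tau0 by (simp add: mult_left_le)
      finally show ?thesis .
    qed
  qed
qed

lemma chord_all:
  assumes D: "D > 0"
   and H1: "\<And>p t. p \<in> P \<Longrightarrow> p + t *\<^sub>R g \<in> P \<Longrightarrow> 0 \<le> t \<Longrightarrow> t \<le> D"
   and H2t: "\<And>p. p \<in> P \<Longrightarrow> p + D *\<^sub>R g \<in> P \<Longrightarrow> p + D *\<^sub>R g \<notin> rel_interior F"
   and H2b: "\<And>p. p \<in> P \<Longrightarrow> p + D *\<^sub>R g \<in> P \<Longrightarrow> p \<notin> rel_interior F"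
  shows "eventually (\<lambda>\<epsilon>. \<forall>a' t. 0 \<le> t \<longrightarrow> a' \<in> Ce \<epsilon> \<longrightarrow> a' + t *\<^sub>R g \<in> Ce \<epsilon> \<longrightarrow> t \<le> D) (at_right 0)"
proof -
  consider "g \<bullet> n > 0" | "g \<bullet> n = 0" | "g \<bullet> n < 0" by linarith
  then show ?thesis
  proof cases
    case 1
    show ?thesis
    proof (rule chord_pos)
      show "D > 0" by (rule D)
      show "g \<bullet> n > 0" by (rule 1)
      show "\<And>p t. p \<in> P \<Longrightarrow> p + t *\<^sub>R g \<in> P \<Longrightarrow> 0 \<le> t \<Longrightarrow> t \<le> D" using H1 by blast
      show "\<And>p. p \<in> P \<Longrightarrow> p + D *\<^sub>R g \<in> P \<Longrightarrow> p + D *\<^sub>R g \<notin> rel_interior F" using H2t by blast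
    qed
  next
    case 2
    show ?thesis using ev_good
    proof (rule eventually_mono)
      fix \<epsilon> assume gd: "good \<epsilon>"
      show "\<forall>a' t. 0 \<le> t \<longrightarrow> a' \<in> Ce \<epsilon> \<longrightarrow> a' + t *\<^sub>R g \<in> Ce \<epsilon> \<longrightarrow> t \<le> D"
      proof (intro allI impI)
        fix a' t assume t0: "0 \<le> t" and a'C: "a' \<in> Ce \<epsilon>" and bC: "a' + t *\<^sub>R g \<in> Ce \<epsilon>"
        show "t \<le> D"
        proof (rule chord_zero[where g=g and \<epsilon>=\<epsilon> and a'=a'])
          show "g \<bullet> n = 0" by (rule 2)
          show "\<And>p t. p \<in> P \<Longrightarrow> p + t *\<^sub>R g \<in> P \<Longrightarrow> 0 \<le> t \<Longrightarrow> t \<le> D" using H1 by blast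
        qed (fact gd t0 a'C bC)+
      qed
    qed
  next
    case 3
    have H1': "t \<le> D" if "p \<in> P" "p + t *\<^sub>R (- g) \<in> P" "0 \<le> t" for p t
      using H1[of "p + t *\<^sub>R (- g)" t] that by simp
    have H2': "p + D *\<^sub>R (- g) \<notin> rel_interior F" if "p \<in> P" "p + D *\<^sub>R (- g) \<in> P" for p
      using H2b[of "p + D *\<^sub>R (- g)"] that by simp
    have "(- g) \<bullet> n > 0" using 3 by simp
    have "eventually (\<lambda>\<epsilon>. \<forall>a' t. 0 \<le> t \<longrightarrow> a' \<in> Ce \<epsilon> \<longrightarrow> a' + t *\<^sub>R (- g) \<in> Ce \<epsilon> \<longrightarrow> t \<le> D) (at_right 0)"
    proof (rule chord_pos)
      show "D > 0" by (rule D)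
      show "(- g) \<bullet> n > 0" by fact
      show "\<And>p t. p \<in> P \<Longrightarrow> p + t *\<^sub>R (- g) \<in> P \<Longrightarrow> 0 \<le> t \<Longrightarrow> t \<le> D" using H1' by blast
      show "\<And>p. p \<in> P \<Longrightarrow> p + D *\<^sub>R (- g) \<in> P \<Longrightarrow> p + D *\<^sub>R (- g) \<notin> rel_interior F" using H2' by blast
    qed
    then show ?thesis
    proof (rule eventually_mono)
      fix \<epsilon> assume A: "\<forall>a' t. 0 \<le> t \<longrightarrow> a' \<in> Ce \<epsilon> \<longrightarrow> a' + t *\<^sub>R - g \<in> Ce \<epsilon> \<longrightarrow> t \<le> D"
      show "\<forall>a' t. 0 \<le> t \<longrightarrow> a' \<in> Ce \<epsilon> \<longrightarrow> a' + t *\<^sub>R g \<in> Ce \<epsilon> \<longrightarrow> t \<le> D"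
      proof (intro allI impI)
        fix a' t assume "0 \<le> t" "a' \<in> Ce \<epsilon>" "a' + t *\<^sub>R g \<in> Ce \<epsilon>"
        then show "t \<le> D" using A[rule_format, of t "a' + t *\<^sub>R g"] by simp
      qed
    qed
  qed
qed

end



lemma facet_aff:
  fixes P :: "'a::euclidean_space set"
  assumes "aff_dim P = int DIM('a)" "F facet_of P" "n \<noteq> 0" "F = P \<inter> {y. n \<bullet> y = h}"
  shows "affine hull F = {y. n \<bullet> y = h}"
proof -
  have "aff_dim F = int DIM('a) - 1" using assms(1,2) by (simp add: facet_of_def)
  moreover have "aff_dim {y. n \<bullet> y = h} = int DIM('a) - 1" using assms(3) by simp
  ultimately have "affine hull F = affine hull {y. n \<bullet> y = h}"
    using aff_dim_eq_full_gen[of F "{y. n \<bullet> y = h}"] assms(4) by auto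
  also have "\<dots> = {y. n \<bullet> y = h}" by (simp add: affine_hyperplane)
  finally show ?thesis .
qed

lemma polytope_body:
  fixes P :: "'a::euclidean_space set"
  assumes "polytope P" "aff_dim P = int DIM('a)"
  shows "convex_body P"
proof -
  have "P \<noteq> {}"
  proof
    assume "P = {}"
    then show False using assms(2) by simp
  qed
  then have "rel_interior P \<noteq> {}" using assms(1) polytope_imp_convex rel_interior_eq_empty by blast
  then have "interior P \<noteq> {}" using assms(2) interior_rel_interior_gen[of P] by simp
  then show ?thesis using assms(1) polytope_imp_compact polytope_imp_convex by (auto simp: convex_body_def)
qed

lemma polyhedron_rep:
  fixes P :: "'a::euclidean_space set"
  assumes "polyhedron P"
  obtains K where "finite K" "P = {y. \<forall>(a,b)\<in>K. a \<bullet> y \<le> b}"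
proof -
  obtain FF where FF: "finite FF" "P = \<Inter> FF" "\<forall>h\<in>FF. \<exists>a b. a \<noteq> 0 \<and> h = {x. a \<bullet> x \<le> b}"
    using assms by (auto simp: polyhedron_def)
  have "\<forall>h\<in>FF. \<exists>ab. h = {x. fst ab \<bullet> x \<le> snd ab}"
  proof
    fix h assume "h \<in> FF"
    then obtain a b where "h = {x. a \<bullet> x \<le> b}" using FF(3) by blast
    then show "\<exists>ab. h = {x. fst ab \<bullet> x \<le> snd ab}" by (intro exI[of _ "(a,b)"]) simp
  qed
  then obtain ab where ab: "\<And>h. h \<in> FF \<Longrightarrow> h = {x. fst (ab h) \<bullet> x \<le> snd (ab h)}" by metis
  define K where "K = ab ` FF"
  have "finite K" using FF by (simp add: K_def)
  moreover have "P = {y. \<forall>(a,b)\<in>K. a \<bullet> y \<le> b}"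
  proof (intro equalityI subsetI)
    fix y assume "y \<in> P"
    then have "\<forall>h\<in>FF. y \<in> h" using FF by blast
    have "fst k \<bullet> y \<le> snd k" if kK: "k \<in> K" for k
    proof -
      obtain h where h: "h \<in> FF" "k = ab h" using kK by (auto simp: K_def)
      then have "y \<in> h" using \<open>\<forall>h\<in>FF. y \<in> h\<close> by blast
      then show ?thesis using ab[OF h(1)] h(2) by blast
    qed
    then show "y \<in> {y. \<forall>(a,b)\<in>K. a \<bullet> y \<le> b}" by auto
  next
    fix y assume y: "y \<in> {y. \<forall>(a,b)\<in>K. a \<bullet> y \<le> b}"
    have "y \<in> h" if "h \<in> FF" for h
    proof -
      have "ab h \<in> K" using that by (simp add: K_def)
      then have "fst (ab h) \<bullet> y \<le> snd (ab h)" using y by (cases "ab h") auto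
      then show ?thesis using ab[OF that] by blast
    qed
    then show "y \<in> P" using FF by blast
  qed
  ultimately show ?thesis using that by blast
qed



lemma forward:
  fixes L :: "'a::euclidean_space set" and P :: "'a set"
  assumes L: "is_lattice L" and poly: "polytope P" and full: "aff_dim P = int DIM('a)"
    and comp: "lattice_complete L P" and Ffac: "F facet_of P"
  shows "\<exists>a b. diameter_segment L P a b \<and> (a \<in> rel_interior F \<or> b \<in> rel_interior F)"
proof (rule ccontr)
  assume nex: "\<not> (\<exists>a b. diameter_segment L P a b \<and> (a \<in> rel_interior F \<or> b \<in> rel_interior F))"
  have body: "convex_body P" by (rule polytope_body[OF poly full])
  have phd: "polyhedron P" using poly polytope_imp_polyhedron by blast
  have bP: "bounded P" using poly polytope_imp_bounded by blast
  have cvP: "convex P" using poly polytope_imp_convex by blast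
  obtain K where finK: "finite K" and Pdef: "P = {y. \<forall>(a,b)\<in>K. a \<bullet> y \<le> b}"
    using polyhedron_rep[OF phd] by blast
  obtain n h where n0: "n \<noteq> 0" and Psub: "P \<subseteq> {y. n \<bullet> y \<le> h}" and Fdef: "F = P \<inter> {y. n \<bullet> y = h}"
    using facet_of_polyhedron[OF phd Ffac] by blast
  have affF: "affine hull F = {y. n \<bullet> y = h}" using facet_aff[OF full Ffac n0 Fdef] .
  have "convex F" using Ffac face_of_imp_convex facet_of_imp_face_of by blast
  moreover have "F \<noteq> {}" using Ffac by (simp add: facet_of_def)
  ultimately obtain c where cF: "c \<in> rel_interior F" using rel_interior_eq_empty by blast
  interpret fs: fsetup K P F n h c
    by unfold_locales (use finK Pdef bP n0 Psub Fdef cF affF in auto)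
  define D where "D = lattice_diam L P"
  have D0: "D > 0" using diam_pos[OF L body] by (simp add: D_def)
  define prim where "prim g \<longleftrightarrow> g \<noteq> 0 \<and> gen_ok L g g" for g
  have H1: "t \<le> D" if pg: "prim g" and pp: "p \<in> P" "p + t *\<^sub>R g \<in> P" "0 \<le> t" for g p t
  proof (cases "t = 0")
    case True then show ?thesis using D0 by simp
  next
    case False
    then have tp: "t > 0" using pp by simp
    have pr: "gen_ok L g g" "g \<noteq> 0" using pg by (auto simp: prim_def)
    have "closed_segment p (p + t *\<^sub>R g) \<subseteq> P" using pp cvP closed_segment_subset by blast
    then have "lattice_length L p (p + t *\<^sub>R g) \<le> D"
      using diam_ge[OF L bP length_prim(2)[OF pr(1) tp pr(2)]] by (simp add: D_def)
    then show ?thesis using length_prim(1)[OF pr(1) tp pr(2)] by simp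
  qed
  have H2: "p \<notin> rel_interior F \<and> p + D *\<^sub>R g \<notin> rel_interior F"
    if pg: "prim g" and pp: "p \<in> P" "p + D *\<^sub>R g \<in> P" for g p
  proof -
    have pr: "gen_ok L g g" "g \<noteq> 0" using pg by (auto simp: prim_def)
    have "closed_segment p (p + D *\<^sub>R g) \<subseteq> P" using pp cvP closed_segment_subset by blast
    moreover have "lattice_length L p (p + D *\<^sub>R g) = D" "lattice_segment L p (p + D *\<^sub>R g)"
      using length_prim[OF pr(1) D0 pr(2)] by auto
    ultimately have "diameter_segment L P p (p + D *\<^sub>R g)"
      unfolding diameter_segment_def by (simp add: D_def)
    then show ?thesis using nex by blast
  qed
  obtain B where B: "\<forall>x\<in>P. norm x \<le> B" using bP by (auto simp: bounded_iff)
  define R0 where "R0 = max B (norm c + norm n)"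
  have CeR: "fs.Ce \<epsilon> \<subseteq> cball 0 R0" if e: "0 < \<epsilon>" "\<epsilon> \<le> 1" for \<epsilon>
  proof -
    have "norm (fs.xe \<epsilon>) \<le> norm c + norm n"
    proof -
      have "norm (fs.xe \<epsilon>) \<le> norm c + norm (\<epsilon> *\<^sub>R n)" unfolding fs.xe_def by (rule norm_triangle_ineq)
      moreover have "norm (\<epsilon> *\<^sub>R n) \<le> norm n" using e by (simp add: mult_left_le_one_le)
      ultimately show ?thesis by simp
    qed
    then have "insert (fs.xe \<epsilon>) P \<subseteq> cball 0 R0" using B by (auto simp: R0_def)
    then show ?thesis unfolding fs.Ce_def by (intro hull_minimal convex_cball)
  qed
  define G0 where "G0 = L \<inter> cball 0 (2 * R0 / D)"
  have finG0: "finite G0" using lattice_finite[OF L] by (simp add: G0_def)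
  have evg: "\<forall>g\<in>G0. eventually (\<lambda>\<epsilon>. prim g \<longrightarrow> (\<forall>a' t. 0 \<le> t \<longrightarrow> a' \<in> fs.Ce \<epsilon> \<longrightarrow> a' + t *\<^sub>R g \<in> fs.Ce \<epsilon> \<longrightarrow> t \<le> D)) (at_right 0)"
  proof
    fix g assume "g \<in> G0"
    show "eventually (\<lambda>\<epsilon>. prim g \<longrightarrow> (\<forall>a' t. 0 \<le> t \<longrightarrow> a' \<in> fs.Ce \<epsilon> \<longrightarrow> a' + t *\<^sub>R g \<in> fs.Ce \<epsilon> \<longrightarrow> t \<le> D)) (at_right 0)"
    proof (cases "prim g")
      case False then show ?thesis by simp
    next
      case True
      have "eventually (\<lambda>\<epsilon>. \<forall>a' t. 0 \<le> t \<longrightarrow> a' \<in> fs.Ce \<epsilon> \<longrightarrow> a' + t *\<^sub>R g \<in> fs.Ce \<epsilon> \<longrightarrow> t \<le> D) (at_right 0)"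
      proof (rule fs.chord_all)
        show "D > 0" by (rule D0)
        show "\<And>p t. p \<in> P \<Longrightarrow> p + t *\<^sub>R g \<in> P \<Longrightarrow> 0 \<le> t \<Longrightarrow> t \<le> D" using H1 True by blast
        show "\<And>p. p \<in> P \<Longrightarrow> p + D *\<^sub>R g \<in> P \<Longrightarrow> p + D *\<^sub>R g \<notin> rel_interior F" using H2 True by blast
        show "\<And>p. p \<in> P \<Longrightarrow> p + D *\<^sub>R g \<in> P \<Longrightarrow> p \<notin> rel_interior F" using H2 True by blast
      qed
      then show ?thesis by (rule eventually_mono) simp
    qed
  qed
  have ev1: "eventually (\<lambda>\<epsilon>::real. \<epsilon> * 1 \<le> 1) (at_right 0)" by (rule ev_small) auto
  have "eventually (\<lambda>\<epsilon>. (\<forall>g\<in>G0. prim g \<longrightarrow> (\<forall>a' t. 0 \<le> t \<longrightarrow> a' \<in> fs.Ce \<epsilon> \<longrightarrow> a' + t *\<^sub>R g \<in> fs.Ce \<epsilon> \<longrightarrow> t \<le> D))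
      \<and> 0 < \<epsilon> \<and> \<epsilon> * 1 \<le> 1) (at_right 0)"
    using eventually_ball_finite[OF finG0 evg] ev_pos ev1 by eventually_elim auto
  moreover have "at_right (0::real) \<noteq> bot" using trivial_limit_at_right_real by (simp add: trivial_limit_def)
  ultimately obtain \<epsilon> where eps: "\<forall>g\<in>G0. prim g \<longrightarrow> (\<forall>a' t. 0 \<le> t \<longrightarrow> a' \<in> fs.Ce \<epsilon> \<longrightarrow> a' + t *\<^sub>R g \<in> fs.Ce \<epsilon> \<longrightarrow> t \<le> D)"
      and e0: "0 < \<epsilon>" and e1: "\<epsilon> \<le> 1"
    using eventually_happens' by fastforce
  define C' where "C' = fs.Ce \<epsilon>"
  have C'R: "C' \<subseteq> cball 0 R0" using CeR e0 e1 by (simp add: C'_def)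
  have bC': "bounded C'" using C'R bounded_cball bounded_subset by blast
  have PC': "P \<subseteq> C'" using fs.P_Ce by (simp add: C'_def)
  have xC': "fs.xe \<epsilon> \<in> C'" using fs.xe_Ce by (simp add: C'_def)
  have xP: "fs.xe \<epsilon> \<notin> P"
  proof
    assume "fs.xe \<epsilon> \<in> P"
    then have "n \<bullet> fs.xe \<epsilon> \<le> h" using Psub by blast
    moreover have "n \<bullet> fs.xe \<epsilon> = h + \<epsilon> * (n \<bullet> n)" using fs.nc by (simp add: fs.xe_def inner_add_right)
    moreover have "\<epsilon> * (n \<bullet> n) > 0" using e0 fs.nn_pos by simp
    ultimately show False by linarith
  qed
  have sub: "P \<subset> C'" using PC' xC' xP by blast
  have body': "convex_body C'"
  proof -
    have "compact (insert (fs.xe \<epsilon>) P)" using poly polytope_imp_compact compact_insert by blast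
    then have "compact C'" by (simp add: C'_def fs.Ce_def compact_convex_hull)
    moreover have "convex C'" by (simp add: C'_def fs.convex_Ce)
    moreover have "interior C' \<noteq> {}"
      using interior_mono[OF PC'] body by (auto simp: convex_body_def)
    ultimately show ?thesis by (simp add: convex_body_def)
  qed
  have "lattice_diam L C' = D"
  proof (rule antisym)
    show "lattice_diam L C' \<le> D"
    proof (rule diam_le[OF L])
      show "C' \<noteq> {}" using sub by blast
      fix a' b' assume seg: "lattice_segment L a' b'" and sub': "closed_segment a' b' \<subseteq> C'"
      show "lattice_length L a' b' \<le> D"
      proof (cases "a' = b'")
        case True then show ?thesis using D0 by (simp add: lattice_length_same)
      next
        case False
        obtain g where g: "gen_ok L (b' - a') g" using seg_gen[OF L seg False] by blast
        have w0: "b' - a' \<noteq> 0" using False by simp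
        note gp = gen_props[OF g w0]
        define lam where "lam = norm (b' - a') / norm g"
        have len: "lattice_length L a' b' = lam" using lattice_length_gen[OF g] by (simp add: lam_def)
        have ab'C: "a' \<in> C'" "b' \<in> C'" using sub' by auto
        have "norm a' \<le> R0" "norm b' \<le> R0" using ab'C C'R by auto
        then have nb: "norm (b' - a') \<le> 2 * R0" using norm_triangle_ineq4[of b' a'] by linarith
        have lam0: "0 \<le> lam" by (simp add: lam_def)
        show ?thesis
        proof (cases "norm g \<le> 2 * R0 / D")
          case True
          then have "g \<in> G0" using gp(2) by (simp add: G0_def)
          moreover have "prim g" using gp by (simp add: prim_def)
          moreover have "a' + lam *\<^sub>R g = b'"
          proof -
            have "b' - a' = lam *\<^sub>R g" using gp(3) by (simp add: lam_def)
            then show ?thesis by (simp add: algebra_simps)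
          qed
          ultimately have "lam \<le> D" using eps ab'C lam0 by (auto simp: C'_def)
          then show ?thesis using len by simp
        next
          case False
          then have "2 * R0 / D < norm g" by simp
          then have "2 * R0 < norm g * D" using D0 by (simp add: divide_less_eq)
          then have "norm (b' - a') < D * norm g" using nb by (simp add: mult.commute)
          then have "lam < D" using gp(1) by (simp add: lam_def divide_less_eq)
          then show ?thesis using len by simp
        qed
      qed
    qed
    show "D \<le> lattice_diam L C'"
      unfolding D_def
    proof (rule diam_le[OF L])
      show "P \<noteq> {}" using body interior_subset by (fastforce simp: convex_body_def)
      fix a b assume "lattice_segment L a b" "closed_segment a b \<subseteq> P"
      then show "lattice_length L a b \<le> lattice_diam L C'" using diam_ge[OF L bC'] PC' by blast
    qed
  qed
  then show False using comp body' sub unfolding lattice_complete_def D_def by blast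
qed



lemma backward:
  fixes L :: "'a::euclidean_space set" and P :: "'a set"
  assumes L: "is_lattice L" and poly: "polytope P" and full: "aff_dim P = int DIM('a)"
    and hyp: "\<forall>F. F facet_of P \<longrightarrow> (\<exists>a b. diameter_segment L P a b \<and> (a \<in> rel_interior F \<or> b \<in> rel_interior F))"
  shows "lattice_complete L P"
  unfolding lattice_complete_def
proof
  assume "\<exists>C'. convex_body C' \<and> P \<subset> C' \<and> lattice_diam L C' = lattice_diam L P"
  then obtain C' where body': "convex_body C'" and sub: "P \<subset> C'" and eqd: "lattice_diam L C' = lattice_diam L P"
    by blast
  obtain x where xC: "x \<in> C'" and xP: "x \<notin> P" using sub by blast
  have phd: "polyhedron P" using poly polytope_imp_polyhedron by blast
  have body: "convex_body P" by (rule polytope_body[OF poly full])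
  obtain FF where finFF: "finite FF" and seq: "P = affine hull P \<inter> \<Inter>FF"
    and faces: "\<And>h. h \<in> FF \<Longrightarrow> \<exists>a b. a \<noteq> 0 \<and> h = {x. a \<bullet> x \<le> b}"
    and min: "\<And>F'. F' \<subset> FF \<Longrightarrow> P \<subset> affine hull P \<inter> \<Inter>F'"
    using phd by (simp add: polyhedron_Int_affine_minimal) meson
  obtain a b where ab: "\<And>h. h \<in> FF \<Longrightarrow> a h \<noteq> 0 \<and> h = {x. a h \<bullet> x \<le> b h}"
    using faces by metis
  have affP: "affine hull P = UNIV" using full aff_dim_eq_full by blast
  have "x \<notin> \<Inter>FF" using xP seq affP by auto
  then obtain h where hFF: "h \<in> FF" and xh: "x \<notin> h" by blast
  define n where "n = a h"
  define hh where "hh = b h"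
  have n0: "n \<noteq> 0" and hdef: "h = {x. n \<bullet> x \<le> hh}" using ab[OF hFF] by (auto simp: n_def hh_def)
  define F where "F = P \<inter> {y. n \<bullet> y = hh}"
  have Ffac: "F facet_of P"
    using facet_of_polyhedron_explicit[OF finFF seq ab min] hFF by (auto simp: F_def n_def hh_def)
  have Psub: "P \<subseteq> {y. n \<bullet> y \<le> hh}" using seq hFF hdef by blast
  have xgt: "n \<bullet> x > hh" using xh hdef by auto
  have affF: "affine hull F = {y. n \<bullet> y = hh}" using facet_aff[OF full Ffac n0 F_def] .
  obtain p q where ds: "diameter_segment L P p q" and pF: "p \<in> rel_interior F"
  proof -
    obtain a1 b1 where "diameter_segment L P a1 b1" "a1 \<in> rel_interior F \<or> b1 \<in> rel_interior F"
      using hyp Ffac by blast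
    then show ?thesis using that diameter_segment_sym[OF L] by blast
  qed
  define D where "D = lattice_diam L P"
  have D0: "D > 0" using diam_pos[OF L body] by (simp add: D_def)
  have seg: "lattice_segment L p q" "closed_segment p q \<subseteq> P" "lattice_length L p q = D"
    using ds by (auto simp: diameter_segment_def D_def)
  have pq: "p \<noteq> q"
  proof
    assume "p = q"
    then have "lattice_length L p q = 0" by (simp add: lattice_length_same)
    then show False using seg(3) D0 by simp
  qed
  obtain g where g: "gen_ok L (q - p) g" using seg_gen[OF L seg(1) pq] by blast
  have pFF: "p \<in> F" using pF rel_interior_subset by blast
  have np: "n \<bullet> p = hh" using pFF by (simp add: F_def)
  have qP: "q \<in> P" using seg(2) by auto
  have nq: "n \<bullet> q \<le> hh" using qP Psub by blast
  obtain r where r: "r > 0" "ball p r \<inter> affine hull F \<subseteq> F" using pF mem_rel_interior_ball by blast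
  define ex where "ex = n \<bullet> x - hh"
  have ex0: "ex > 0" using xgt by (simp add: ex_def)
  define k where "k = (hh - n \<bullet> q) / ex"
  have k0: "k \<ge> 0" using nq ex0 by (simp add: k_def)
  have kex: "k * ex = hh - n \<bullet> q" using ex0 by (simp add: k_def)
  define M where "M = norm (p - q) + k * norm (x - p)"
  have M0: "M \<ge> 0" using k0 by (simp add: M_def)
  define \<delta> where "\<delta> = min (1 / (2 * (k + 1))) (r / (4 * (M + 1)))"
  have d0: "\<delta> > 0" using k0 M0 r by (simp add: \<delta>_def)
  have d1: "\<delta> \<le> 1 / (2 * (k + 1))" "\<delta> \<le> r / (4 * (M + 1))" by (simp_all add: \<delta>_def)
  define \<tau> where "\<tau> = \<delta> * k"
  have tau0: "\<tau> \<ge> 0" using d0 k0 by (simp add: \<tau>_def)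
  have tau1: "\<tau> \<le> 1/2"
  proof -
    have "\<delta> * (2 * (k + 1)) \<le> 1" using d1(1) k0 by (simp add: le_divide_eq)
    then have "2 * \<tau> \<le> 1" using d0 by (simp add: \<tau>_def algebra_simps)
    then show ?thesis by simp
  qed
  define w where "w = \<delta> *\<^sub>R (p - q) - \<tau> *\<^sub>R (x - p)"
  define f where "f = p + (1 / (1 - \<tau>)) *\<^sub>R w"
  have nw: "n \<bullet> w = 0"
  proof -
    have "n \<bullet> w = \<delta> * (n \<bullet> p - n \<bullet> q) - \<tau> * (n \<bullet> x - n \<bullet> p)"
      by (simp add: w_def inner_diff_right)
    also have "\<dots> = \<delta> * (hh - n \<bullet> q) - \<delta> * (k * ex)" by (simp add: np ex_def \<tau>_def)
    also have "\<dots> = 0" by (simp add: kex)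
    finally show ?thesis .
  qed
  have nf: "n \<bullet> f = hh" by (simp add: f_def inner_add_right nw np)
  have nwM: "norm w \<le> \<delta> * M"
  proof -
    have "norm w \<le> norm (\<delta> *\<^sub>R (p - q)) + norm (\<tau> *\<^sub>R (x - p))"
      unfolding w_def by (rule norm_triangle_ineq4)
    also have "\<dots> = \<delta> * norm (p - q) + \<tau> * norm (x - p)" using d0 tau0 by simp
    also have "\<dots> = \<delta> * M" by (simp add: M_def \<tau>_def algebra_simps)
    finally show ?thesis .
  qed
  have "norm (f - p) < r"
  proof -
    have "norm (f - p) = norm w / (1 - \<tau>)" using tau1 by (simp add: f_def)
    also have "\<dots> \<le> 2 * norm w"
    proof -
      have pos: "0 < 1 - \<tau>" using tau1 by simp
      have "norm w * 1 \<le> norm w * (2 * (1 - \<tau>))" using tau1 by (intro mult_left_mono) auto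
      then have "norm w \<le> (2 * norm w) * (1 - \<tau>)" by (simp add: algebra_simps)
      then show ?thesis by (simp only: pos_divide_le_eq[OF pos])
    qed
    also have "\<dots> \<le> 2 * (\<delta> * M)" using nwM by simp
    also have "\<dots> \<le> 2 * (r / (4 * (M + 1)) * M)"
    proof -
      have "\<delta> * M \<le> r / (4 * (M + 1)) * M" using d1(2) M0 by (rule mult_right_mono)
      then show ?thesis by linarith
    qed
    also have "\<dots> < r"
    proof -
      have "M / (M + 1) < 1" using M0 by simp
      then have Y1: "r * (M / (M + 1)) < r * 1" using r(1) by (intro mult_strict_left_mono) auto
      have eq: "2 * (r / (4 * (M + 1)) * M) = (r * (M / (M + 1))) / 2"
      proof -
        have "4 + M * 4 \<noteq> 0" "2 + M * 2 \<noteq> 0" "M + 1 \<noteq> 0" using M0 by linarith+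
        then show ?thesis by (simp add: field_simps)
      qed
      define Y where "Y = r * (M / (M + 1))"
      have Ylt: "Y < r" using Y1 unfolding Y_def by simp
      have "2 * (r / (4 * (M + 1)) * M) = Y / 2" using eq unfolding Y_def .
      then show ?thesis using Ylt r(1) by linarith
    qed
    finally show ?thesis .
  qed
  then have "f \<in> ball p r" by (simp add: dist_norm norm_minus_commute)
  moreover have "f \<in> affine hull F" using nf affF by simp
  ultimately have fF: "f \<in> F" using r(2) by blast
  then have fC: "f \<in> C'" using sub by (auto simp: F_def)
  define p' where "p' = p - \<delta> *\<^sub>R (q - p)"
  have p'eq: "p' = (1 - \<tau>) *\<^sub>R f + \<tau> *\<^sub>R x"
  proof -
    have "(1 - \<tau>) *\<^sub>R f = (1 - \<tau>) *\<^sub>R p + w" using tau1 by (simp add: f_def algebra_simps)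
    then show ?thesis by (simp add: p'_def w_def algebra_simps)
  qed
  have cvC: "convex C'" using body' by (simp add: convex_body_def)
  have p'C: "p' \<in> C'" unfolding p'eq using cvC fC xC tau0 tau1 by (simp add: convex_def)
  have qC: "q \<in> C'" using qP sub by blast
  have segC: "closed_segment p' q \<subseteq> C'" using p'C qC cvC closed_segment_subset by blast
  have qp': "q - p' = (1 + \<delta>) *\<^sub>R (q - p)" by (simp add: p'_def algebra_simps)
  have g': "gen_ok L (q - p') g" unfolding qp' using gen_scale[OF g] d0 by simp
  have w0: "q - p' \<noteq> 0" using qp' pq d0 by (smt (verit) add_pos_pos eq_iff_diff_eq_0 scaleR_eq_0_iff zero_less_one)
  note gp = gen_props[OF g' w0]
  have seg': "lattice_segment L p' q" unfolding lattice_segment_def using gp(1,2,3) by blast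
  have "lattice_length L p' q = norm (q - p') / norm g" by (rule lattice_length_gen[OF g'])
  also have "\<dots> = (1 + \<delta>) * (norm (q - p) / norm g)" using d0 by (simp add: qp')
  also have "\<dots> = (1 + \<delta>) * D" using lattice_length_gen[OF g] seg(3) by simp
  finally have lenp': "lattice_length L p' q = (1 + \<delta>) * D" .
  have "bounded C'" using body' compact_imp_bounded by (auto simp: convex_body_def)
  then have "(1 + \<delta>) * D \<le> lattice_diam L C'" using diam_ge[OF L _ seg' segC] lenp' by simp
  moreover have "(1 + \<delta>) * D > D" using d0 D0 by simp
  ultimately show False using eqd D_def by simp
qed



theorem proposition3p7:
  fixes L :: "'a::euclidean_space set" and P :: "'a set"
  assumes "is_lattice L"
    and "polytope P" and "aff_dim P = int DIM('a)"
  shows "lattice_complete L P \<longleftrightarrow>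
    (\<forall>F. F facet_of P \<longrightarrow>
       (\<exists>a b. diameter_segment L P a b \<and> (a \<in> rel_interior F \<or> b \<in> rel_interior F)))"
  using forward[OF assms] backward[OF assms] by blast

end
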